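(* Let $\pi^*\in\Pi$ be a Nash policy. (a) If $\pi^*$ is second-order stationary, there exist $\mu>0$ and a neighborhood $\mathcal V$ of $\pi^*$ in $\Pi$ such that $\langle v(\pi),\pi-\pi^*\rangle\le-\mu\|\pi-\pi^*\|^2$ for all $\pi\in\mathcal V$. (b) If $\pi^*$ is strict, there exist $\mu>0$ and a neighborhood $\mathcal V$ of $\pi^*$ in $\Pi$ such that $\langle v(\pi),\pi-\pi^*\rangle\le-\mu\|\pi-\pi^*\|$ for all $\pi\in\mathcal V$.
   Context: Standing setting. Finite $N$-player stochastic game with random stopping: players $\mathcal N$, finite states $\mathcal S$, finite action sets $\mathcal A_i$, $\mathcal A=\prod_i\mathcal A_i$, rewards $r_i:\mathcal S\times\mathcal A\to[-1,1]$, nonnegative transition weights $P(s'\mid s,a)$ with stopping probability $\zeta_{s,a}=1-\sum_{s'}P(s'\mid s,a)\ge\zeta>0$, initial distribution $\rho$. Policies $\pi_i\in\Pi_i=\Delta(\mathcal A_i)^{\mathcal S}$, $\Pi=\prod_i\Pi_i$ (Euclidean norm). Episodes: $s_0\sim\rho$; players independently draw $a_{i,t}\sim\pi_i(\cdot\mid s_t)$; stop w.p. $\zeta_{s_t,a_t}$ (time $T(\tau)$), else move to $s'$ w.p. $P(s'\mid s_t,a_t)$. $V_{i,\rho}(\pi)=\mathbb E_\pi[\sum_{t=0}^{T(\tau)}r_i(s_t,a_t)]$, $v_i(\pi)=\nabla_{\pi_i}V_{i,\rho}(\pi)$ (smooth on a neighborhood of $\Pi$), $v=(v_i)_i$, $J_v(\pi)$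 its Jacobian. Nash policy: $V_{i,\rho}(\pi^* )\ge V_{i,\rho}(\pi_i;\pi^*_{-i})$ for all $i,\pi_i$. SOS: $(\pi-\pi^* )^\top J_v(\pi^* )(\pi-\pi^* )<0$ for all $\pi\in\Pi\setminus\{\pi^*\}$. Strict: each $\pi^*_i(\cdot\mid s)$ is a point mass and $\langle v(\pi^* ),\pi-\pi^*\rangle<0$ for all $\pi\in\Pi\setminus\{\pi^*\}$. *)

theory Defs
  imports "HOL-Analysis.Analysis"
begin

text \<open>
  A policy profile is q :: 'i => 's => 'a => real, with
  q i s b = probability that player i plays b in state s.
  Transition weights P s a s' = P(s' | s, a); rewards r i s a; initial distribution rho.
\<close>

definition joint_actions :: "('i::finite \<Rightarrow> 'a set) \<Rightarrow> ('i \<Rightarrow> 'a) set" where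
  "joint_actions A = PiE UNIV A"

definition jointp :: "('i::finite \<Rightarrow> 's \<Rightarrow> 'a \<Rightarrow> real) \<Rightarrow> 's \<Rightarrow> ('i \<Rightarrow> 'a) \<Rightarrow> real" where
  "jointp q s a = (\<Prod>i\<in>UNIV. q i s (a i))"

text \<open>The policy space Pi = prod_i Delta(A_i)^S (entries outside A i are zero).\<close>
definition policies :: "('i::finite \<Rightarrow> 'a set) \<Rightarrow> ('i \<Rightarrow> 's \<Rightarrow> 'a \<Rightarrow> real) set" where
  "policies A = {q. \<forall>i s. (\<forall>b\<in>A i. 0 \<le> q i s b) \<and> (\<Sum>b\<in>A i. q i s b) = 1
                           \<and> (\<forall>b. b \<notin> A i \<longrightarrow> q i s b = 0)}"

text \<open>sub-probability of (not yet stopped and being in state s at time t)\<close>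
fun sdist :: "('i::finite \<Rightarrow> 'a set) \<Rightarrow> ('s::finite \<Rightarrow> ('i \<Rightarrow> 'a) \<Rightarrow> 's \<Rightarrow> real) \<Rightarrow> ('s \<Rightarrow> real)
              \<Rightarrow> ('i \<Rightarrow> 's \<Rightarrow> 'a \<Rightarrow> real) \<Rightarrow> nat \<Rightarrow> 's \<Rightarrow> real" where
  "sdist A P rho q 0 s' = rho s'"
| "sdist A P rho q (Suc t) s' =
     (\<Sum>s\<in>UNIV. sdist A P rho q t s * (\<Sum>a\<in>joint_actions A. jointp q s a * P s a s'))"

text \<open>V_{i,rho}(q) = E_pi[ sum_{t=0}^{T} r_i(s_t,a_t) ], written as the series over time
  of expected rewards (reward at time t is collected iff the episode has not stopped before t).
  The same formula defines V on a neighbourhood of the policy space.\<close>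
definition Vval :: "('i::finite \<Rightarrow> 'a set) \<Rightarrow> ('s::finite \<Rightarrow> ('i \<Rightarrow> 'a) \<Rightarrow> 's \<Rightarrow> real)
     \<Rightarrow> ('i \<Rightarrow> 's \<Rightarrow> ('i \<Rightarrow> 'a) \<Rightarrow> real) \<Rightarrow> ('s \<Rightarrow> real)
     \<Rightarrow> ('i \<Rightarrow> 's \<Rightarrow> 'a \<Rightarrow> real) \<Rightarrow> 'i \<Rightarrow> real" where
  "Vval A P r rho q i =
     (\<Sum>t. \<Sum>s\<in>UNIV. sdist A P rho q t s * (\<Sum>a\<in>joint_actions A. jointp q s a * r i s a))"

definition upd_coord :: "('i \<Rightarrow> 's \<Rightarrow> 'a \<Rightarrow> real) \<Rightarrow> 'i \<Rightarrow> 's \<Rightarrow> 'a \<Rightarrow> real \<Rightarrow> ('i \<Rightarrow> 's \<Rightarrow> 'a \<Rightarrow> real)" where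
  "upd_coord q i s b x = q(i := (q i)(s := (q i s)(b := x)))"

definition pderiv_coord :: "(('i \<Rightarrow> 's \<Rightarrow> 'a \<Rightarrow> real) \<Rightarrow> real) \<Rightarrow> ('i \<Rightarrow> 's \<Rightarrow> 'a \<Rightarrow> real)
     \<Rightarrow> 'i \<Rightarrow> 's \<Rightarrow> 'a \<Rightarrow> real" where
  "pderiv_coord f q i s b = deriv (\<lambda>x. f (upd_coord q i s b x)) (q i s b)"

definition vgrad :: "('i::finite \<Rightarrow> 'a set) \<Rightarrow> ('s::finite \<Rightarrow> ('i \<Rightarrow> 'a) \<Rightarrow> 's \<Rightarrow> real)
     \<Rightarrow> ('i \<Rightarrow> 's \<Rightarrow> ('i \<Rightarrow> 'a) \<Rightarrow> real) \<Rightarrow> ('s \<Rightarrow> real)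
     \<Rightarrow> ('i \<Rightarrow> 's \<Rightarrow> 'a \<Rightarrow> real) \<Rightarrow> 'i \<Rightarrow> 's \<Rightarrow> 'a \<Rightarrow> real" where
  "vgrad A P r rho q i s b = pderiv_coord (\<lambda>q. Vval A P r rho q i) q i s b"

definition pinner :: "('i::finite \<Rightarrow> 'a set) \<Rightarrow> ('i \<Rightarrow> 's::finite \<Rightarrow> 'a \<Rightarrow> real)
     \<Rightarrow> ('i \<Rightarrow> 's \<Rightarrow> 'a \<Rightarrow> real) \<Rightarrow> real" where
  "pinner A x y = (\<Sum>i\<in>UNIV. \<Sum>s\<in>UNIV. \<Sum>b\<in>A i. x i s b * y i s b)"

definition pnorm :: "('i::finite \<Rightarrow> 'a set) \<Rightarrow> ('i \<Rightarrow> 's::finite \<Rightarrow> 'a \<Rightarrow> real) \<Rightarrow> real" where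
  "pnorm A x = sqrt (pinner A x x)"

definition pdiff :: "('i \<Rightarrow> 's \<Rightarrow> 'a \<Rightarrow> real) \<Rightarrow> ('i \<Rightarrow> 's \<Rightarrow> 'a \<Rightarrow> real) \<Rightarrow> ('i \<Rightarrow> 's \<Rightarrow> 'a \<Rightarrow> real)" where
  "pdiff x y = (\<lambda>i s b. x i s b - y i s b)"

definition jac_quad :: "('i::finite \<Rightarrow> 'a set) \<Rightarrow> ('s::finite \<Rightarrow> ('i \<Rightarrow> 'a) \<Rightarrow> 's \<Rightarrow> real)
     \<Rightarrow> ('i \<Rightarrow> 's \<Rightarrow> ('i \<Rightarrow> 'a) \<Rightarrow> real) \<Rightarrow> ('s \<Rightarrow> real)
     \<Rightarrow> ('i \<Rightarrow> 's \<Rightarrow> 'a \<Rightarrow> real) \<Rightarrow> ('i \<Rightarrow> 's \<Rightarrow> 'a \<Rightarrow> real) \<Rightarrow> real" where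
  "jac_quad A P r rho q x =
     (\<Sum>i\<in>UNIV. \<Sum>s\<in>UNIV. \<Sum>b\<in>A i. \<Sum>j\<in>UNIV. \<Sum>s'\<in>UNIV. \<Sum>c\<in>A j.
        x i s b * pderiv_coord (\<lambda>q. vgrad A P r rho q i s b) q j s' c * x j s' c)"

definition is_nash :: "('i::finite \<Rightarrow> 'a set) \<Rightarrow> ('s::finite \<Rightarrow> ('i \<Rightarrow> 'a) \<Rightarrow> 's \<Rightarrow> real)
     \<Rightarrow> ('i \<Rightarrow> 's \<Rightarrow> ('i \<Rightarrow> 'a) \<Rightarrow> real) \<Rightarrow> ('s \<Rightarrow> real)
     \<Rightarrow> ('i \<Rightarrow> 's \<Rightarrow> 'a \<Rightarrow> real) \<Rightarrow> bool" where
  "is_nash A P r rho pistar \<longleftrightarrow> pistar \<in> policies A \<and>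
     (\<forall>i. \<forall>q\<in>policies A. Vval A P r rho pistar i \<ge> Vval A P r rho (pistar(i := q i)) i)"

definition is_SOS :: "('i::finite \<Rightarrow> 'a set) \<Rightarrow> ('s::finite \<Rightarrow> ('i \<Rightarrow> 'a) \<Rightarrow> 's \<Rightarrow> real)
     \<Rightarrow> ('i \<Rightarrow> 's \<Rightarrow> ('i \<Rightarrow> 'a) \<Rightarrow> real) \<Rightarrow> ('s \<Rightarrow> real)
     \<Rightarrow> ('i \<Rightarrow> 's \<Rightarrow> 'a \<Rightarrow> real) \<Rightarrow> bool" where
  "is_SOS A P r rho pistar \<longleftrightarrow>
     (\<forall>q\<in>policies A - {pistar}. jac_quad A P r rho pistar (pdiff q pistar) < 0)"

definition is_strict :: "('i::finite \<Rightarrow> 'a set) \<Rightarrow> ('s::finite \<Rightarrow> ('i \<Rightarrow> 'a) \<Rightarrow> 's \<Rightarrow> real)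
     \<Rightarrow> ('i \<Rightarrow> 's \<Rightarrow> ('i \<Rightarrow> 'a) \<Rightarrow> real) \<Rightarrow> ('s \<Rightarrow> real)
     \<Rightarrow> ('i \<Rightarrow> 's \<Rightarrow> 'a \<Rightarrow> real) \<Rightarrow> bool" where
  "is_strict A P r rho pistar \<longleftrightarrow>
     (\<forall>i s. \<exists>b\<in>A i. \<forall>c\<in>A i. pistar i s c = (if c = b then 1 else 0)) \<and>
     (\<forall>q\<in>policies A - {pistar}. pinner A (vgrad A P r rho pistar) (pdiff q pistar) < 0)"

end

theory Submission
  imports Defs
begin


definition addv :: "('i \<Rightarrow> 's \<Rightarrow> 'a \<Rightarrow> real) \<Rightarrow> real \<Rightarrow> ('i \<Rightarrow> 's \<Rightarrow> 'a \<Rightarrow> real) \<Rightarrow> ('i \<Rightarrow> 's \<Rightarrow> 'a \<Rightarrow> real)"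
  where "addv x t h = (\<lambda>i s b. x i s b + t * h i s b)"

lemma addv_0[simp]: "addv x 0 h = x" by (simp add: addv_def)

inductive sm :: "('i::finite \<Rightarrow> 'a set) \<Rightarrow> ('i \<Rightarrow> 's::finite \<Rightarrow> 'a \<Rightarrow> real) set
   \<Rightarrow> (('i \<Rightarrow> 's \<Rightarrow> 'a \<Rightarrow> real) \<Rightarrow> real) \<Rightarrow> bool" for A U where
  sm_const: "sm A U (\<lambda>q. c)"
| sm_proj: "b \<in> A i \<Longrightarrow> sm A U (\<lambda>q. q i s b)"
| sm_add: "sm A U f \<Longrightarrow> sm A U g \<Longrightarrow> sm A U (\<lambda>q. f q + g q)"
| sm_mul: "sm A U f \<Longrightarrow> sm A U g \<Longrightarrow> sm A U (\<lambda>q. f q * g q)"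
| sm_inv: "sm A U f \<Longrightarrow> (\<forall>q\<in>U. f q \<noteq> 0) \<Longrightarrow> sm A U (\<lambda>q. inverse (f q))"

lemma sm_sum: "(\<And>x. x \<in> I \<Longrightarrow> sm A U (f x)) \<Longrightarrow> sm A U (\<lambda>q. \<Sum>x\<in>I. f x q)"
proof (induction I rule: infinite_finite_induct)
  case (infinite I) then show ?case by (simp add: sm_const)
next
  case empty then show ?case by (simp add: sm_const)
next
  case (insert x F) then show ?case by (simp add: sm_add)
qed

lemma sm_prod: "(\<And>x. x \<in> I \<Longrightarrow> sm A U (f x)) \<Longrightarrow> sm A U (\<lambda>q. \<Prod>x\<in>I. f x q)"
proof (induction I rule: infinite_finite_induct)
  case (infinite I) then show ?case by (simp add: sm_const)
next
  case empty then show ?case by (simp add: sm_const)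
next
  case (insert x F) then show ?case by (simp add: sm_mul)
qed

lemma pinner_add: "pinner A h (\<lambda>i s b. X i s b + Y i s b) = pinner A h X + pinner A h Y"
  by (simp add: pinner_def distrib_left sum.distrib)

lemma pinner_rmul: "pinner A h (\<lambda>i s b. X i s b * c) = pinner A h X * c"
  by (simp add: pinner_def sum_distrib_right mult.assoc)

lemma pinner_lmul: "pinner A h (\<lambda>i s b. c * X i s b) = c * pinner A h X"
  by (simp add: pinner_def sum_distrib_left mult.left_commute)

lemma pinner_zero: "pinner A h (\<lambda>i s b. 0) = 0"
  by (simp add: pinner_def)

lemma pinner_delta:
  fixes A :: "'i::finite \<Rightarrow> 'a set" and h :: "'i \<Rightarrow> 's::finite \<Rightarrow> 'a \<Rightarrow> real"
  assumes "b \<in> A i" "finite (A i)"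
  shows "pinner A h (\<lambda>j s' c. if j = i \<and> s' = s \<and> c = b then 1 else 0) = h i s b"
proof -
  have "pinner A h (\<lambda>j s' c. if j = i \<and> s' = s \<and> c = b then 1 else 0)
     = (\<Sum>j\<in>UNIV. \<Sum>s'\<in>UNIV. \<Sum>c\<in>A j. if j = i \<and> s' = s \<and> c = b then h j s' c else 0)"
    unfolding pinner_def by (intro sum.cong refl) auto
  also have "\<dots> = (\<Sum>j\<in>UNIV. \<Sum>s'\<in>UNIV. if j = i \<and> s' = s then h i s b else 0)"
  proof (intro sum.cong refl)
    fix j s'
    show "(\<Sum>c\<in>A j. if j = i \<and> s' = s \<and> c = b then h j s' c else 0) = (if j = i \<and> s' = s then h i s b else 0)"
    proof (cases "j = i \<and> s' = s")
      case True
      then show ?thesis using assms by (simp add: sum.delta')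
    next
      case False
      then have "\<And>c. (if j = i \<and> s' = s \<and> c = b then h j s' c else 0) = 0" by auto
      then show ?thesis using False by (simp only: sum.neutral_const if_False)
    qed
  qed
  also have "\<dots> = (\<Sum>j\<in>UNIV. if j = i then h i s b else 0)"
    by (intro sum.cong refl) (simp add: sum.delta')
  also have "\<dots> = h i s b" by (simp add: sum.delta')
  finally show ?thesis .
qed

lemma sm_deriv:
  assumes "sm A U F" and fin: "\<And>i. finite (A i)"
  shows "\<exists>G. (\<forall>i s b. b \<in> A i \<longrightarrow> sm A U (G i s b)) \<and>
     (\<forall>x\<in>U. \<forall>h. ((\<lambda>t. F (addv x t h)) has_real_derivative pinner A h (\<lambda>i s b. G i s b x)) (at 0))"
  using assms(1)
proof induction
  case (sm_const c)
  show ?case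
    by (rule exI[of _ "\<lambda>i s b q. 0"]) (simp add: sm.sm_const pinner_zero)
next
  case (sm_proj b i s)
  show ?case
  proof (rule exI[of _ "\<lambda>j s' c q. if j = i \<and> s' = s \<and> c = b then 1 else 0"], intro conjI allI impI ballI)
    fix j s' c assume "c \<in> A j"
    show "sm A U (\<lambda>q. if j = i \<and> s' = s \<and> c = b then 1 else 0)" by (rule sm.sm_const)
  next
    fix x h
    have "((\<lambda>t. x i s b + t * h i s b) has_real_derivative h i s b) (at 0)"
      by (auto intro!: derivative_eq_intros)
    then show "((\<lambda>t. addv x t h i s b) has_real_derivative
         pinner A h (\<lambda>j s' c. if j = i \<and> s' = s \<and> c = b then 1 else 0)) (at 0)"
      using pinner_delta[where A=A and i=i and b=b and s=s and h=h, OF sm_proj fin] by (simp add: addv_def)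
  qed
next
  case (sm_add f g)
  then obtain G1 G2 where G1: "\<forall>i s b. b \<in> A i \<longrightarrow> sm A U (G1 i s b)"
     "\<forall>x\<in>U. \<forall>h. ((\<lambda>t. f (addv x t h)) has_real_derivative pinner A h (\<lambda>i s b. G1 i s b x)) (at 0)"
    and G2: "\<forall>i s b. b \<in> A i \<longrightarrow> sm A U (G2 i s b)"
     "\<forall>x\<in>U. \<forall>h. ((\<lambda>t. g (addv x t h)) has_real_derivative pinner A h (\<lambda>i s b. G2 i s b x)) (at 0)"
    by blast
  show ?case
  proof (rule exI[of _ "\<lambda>i s b q. G1 i s b q + G2 i s b q"], intro conjI allI impI ballI)
    fix i s b assume "b \<in> A i"
    then show "sm A U (\<lambda>q. G1 i s b q + G2 i s b q)"
      using G1 G2 by (blast intro: sm.sm_add)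
  next
    fix x h assume x: "x \<in> U"
    show "((\<lambda>t. f (addv x t h) + g (addv x t h)) has_real_derivative
         pinner A h (\<lambda>i s b. G1 i s b x + G2 i s b x)) (at 0)"
      unfolding pinner_add using G1(2) G2(2) x by (intro DERIV_add) auto
  qed
next
  case (sm_mul f g)
  then obtain G1 G2 where G1: "\<forall>i s b. b \<in> A i \<longrightarrow> sm A U (G1 i s b)"
     "\<forall>x\<in>U. \<forall>h. ((\<lambda>t. f (addv x t h)) has_real_derivative pinner A h (\<lambda>i s b. G1 i s b x)) (at 0)"
    and G2: "\<forall>i s b. b \<in> A i \<longrightarrow> sm A U (G2 i s b)"
     "\<forall>x\<in>U. \<forall>h. ((\<lambda>t. g (addv x t h)) has_real_derivative pinner A h (\<lambda>i s b. G2 i s b x)) (at 0)"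
    by blast
  show ?case
  proof (rule exI[of _ "\<lambda>i s b q. G1 i s b q * g q + G2 i s b q * f q"], intro conjI allI impI ballI)
    fix i s b assume "b \<in> A i"
    then show "sm A U (\<lambda>q. G1 i s b q * g q + G2 i s b q * f q)"
      using G1 G2 sm_mul by (auto intro!: sm.sm_add sm.sm_mul)
  next
    fix x h assume x: "x \<in> U"
    have "((\<lambda>t. f (addv x t h) * g (addv x t h)) has_real_derivative
       pinner A h (\<lambda>i s b. G1 i s b x) * g (addv x 0 h) + pinner A h (\<lambda>i s b. G2 i s b x) * f (addv x 0 h)) (at 0)"
      using G1(2) G2(2) x by (intro DERIV_mult) auto
    then show "((\<lambda>t. f (addv x t h) * g (addv x t h)) has_real_derivative
         pinner A h (\<lambda>i s b. G1 i s b x * g x + G2 i s b x * f x)) (at 0)"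
      by (simp add: pinner_add pinner_rmul)
  qed
next
  case (sm_inv f)
  then obtain G1 where G1: "\<forall>i s b. b \<in> A i \<longrightarrow> sm A U (G1 i s b)"
     "\<forall>x\<in>U. \<forall>h. ((\<lambda>t. f (addv x t h)) has_real_derivative pinner A h (\<lambda>i s b. G1 i s b x)) (at 0)"
    by blast
  show ?case
  proof (rule exI[of _ "\<lambda>i s b q. G1 i s b q * (- 1 * (inverse (f q) * inverse (f q)))"], intro conjI allI impI ballI)
    fix i s b
    have i1: "sm A U (\<lambda>q. inverse (f q))" using sm_inv by (blast intro: sm.sm_inv)
    have i2: "sm A U (\<lambda>q. inverse (f q) * inverse (f q))" by (rule sm.sm_mul[OF i1 i1])
    have i3: "sm A U (\<lambda>q. - 1 * (inverse (f q) * inverse (f q)))" by (rule sm.sm_mul[OF sm.sm_const i2])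
    assume "b \<in> A i"
    then show "sm A U (\<lambda>q. G1 i s b q * (- 1 * (inverse (f q) * inverse (f q))))"
    proof -
      have g1: "sm A U (G1 i s b)" using G1(1) \<open>b \<in> A i\<close> by blast
      show ?thesis by (rule sm.sm_mul[OF g1 i3])
    qed
  next
    fix x h assume x: "x \<in> U"
    have "((\<lambda>t. inverse (f (addv x t h))) has_real_derivative
       - (pinner A h (\<lambda>i s b. G1 i s b x) * inverse (f (addv x 0 h) ^ Suc (Suc 0)))) (at 0)"
      using G1(2) x sm_inv by (intro DERIV_inverse_fun) auto
    then show "((\<lambda>t. inverse (f (addv x t h))) has_real_derivative
         pinner A h (\<lambda>i s b. G1 i s b x * (- 1 * (inverse (f x) * inverse (f x))))) (at 0)"
      by (subst pinner_rmul) simp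
  qed
qed



definition Kf :: "('i::finite \<Rightarrow> 'a set) \<Rightarrow> ('i \<Rightarrow> 's::finite \<Rightarrow> 'a \<Rightarrow> real) \<Rightarrow> ('i \<Rightarrow> 's \<Rightarrow> 'a \<Rightarrow> real) filter"
  where "Kf A x = filtercomap (\<lambda>y. pnorm A (pdiff y x)) (nhds 0)"

lemma coord_le_pnorm:
  fixes A :: "'i::finite \<Rightarrow> 'a set" and d :: "'i \<Rightarrow> 's::finite \<Rightarrow> 'a \<Rightarrow> real"
  assumes fin: "\<And>i. finite (A i)" and b: "b \<in> A i"
  shows "\<bar>d i s b\<bar> \<le> pnorm A d"
proof -
  have "d i s b * d i s b \<le> (\<Sum>c\<in>A i. d i s c * d i s c)"
    using fin b by (intro member_le_sum) auto
  also have "\<dots> \<le> (\<Sum>s'\<in>UNIV. \<Sum>c\<in>A i. d i s' c * d i s' c)"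
    by (intro member_le_sum) (auto intro: sum_nonneg)
  also have "\<dots> \<le> (\<Sum>j\<in>UNIV. \<Sum>s'\<in>UNIV. \<Sum>c\<in>A j. d j s' c * d j s' c)"
    by (intro member_le_sum) (auto intro!: sum_nonneg)
  finally have "sqrt (d i s b * d i s b) \<le> pnorm A d"
    unfolding pnorm_def pinner_def by (rule real_sqrt_le_mono)
  then show ?thesis by (simp only: real_sqrt_abs2)
qed

lemma pnorm_nonneg: "(\<And>i. finite (A i)) \<Longrightarrow> 0 \<le> pnorm A d"
  unfolding pnorm_def pinner_def by (auto intro!: sum_nonneg)

lemma sm_cont:
  assumes "sm A U F" and fin: "\<And>i. finite (A i)" and x: "x \<in> U"
  shows "(F \<longlongrightarrow> F x) (Kf A x)"
  using assms(1)
proof induction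
  case (sm_const c) then show ?case by simp
next
  case (sm_proj b i s)
  show ?case unfolding tendsto_iff
  proof (intro allI impI)
    fix e :: real assume e: "0 < e"
    have "eventually (\<lambda>z. dist z (0::real) < e) (nhds 0)"
      using e by (auto simp: eventually_nhds_metric)
    moreover have "\<forall>y. dist (pnorm A (pdiff y x)) 0 < e \<longrightarrow> dist (y i s b) (x i s b) < e"
    proof (intro allI impI)
      fix y assume "dist (pnorm A (pdiff y x)) 0 < e"
      moreover have "\<bar>pdiff y x i s b\<bar> \<le> pnorm A (pdiff y x)"
        by (rule coord_le_pnorm[where A=A and i=i and b=b, OF fin sm_proj])
      ultimately show "dist (y i s b) (x i s b) < e"
        by (simp add: dist_real_def pdiff_def)
    qed
    ultimately show "eventually (\<lambda>y. dist (y i s b) (x i s b) < e) (Kf A x)"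
      unfolding Kf_def eventually_filtercomap by blast
  qed
next
  case (sm_add f g) then show ?case by (intro tendsto_add)
next
  case (sm_mul f g) then show ?case by (intro tendsto_mult)
next
  case (sm_inv f) then show ?case using x by (intro tendsto_inverse) auto
qed

lemma Kf_eventually:
  assumes "eventually P (Kf A x)"
  shows "\<exists>d>0. \<forall>y. pnorm A (pdiff y x) < d \<longrightarrow> P y"
proof -
  from assms obtain Q where Q: "eventually Q (nhds (0::real))" "\<forall>y. Q (pnorm A (pdiff y x)) \<longrightarrow> P y"
    unfolding Kf_def eventually_filtercomap by blast
  from Q(1) obtain d where d: "d > 0" "\<forall>z. dist z 0 < d \<longrightarrow> Q z"
    unfolding eventually_nhds_metric by blast
  have "\<forall>y. pnorm A (pdiff y x) < d \<longrightarrow> P y"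
  proof (intro allI impI)
    fix y assume "pnorm A (pdiff y x) < d"
    moreover have "0 \<le> pnorm A (pdiff y x)"
      unfolding pnorm_def pinner_def by (auto intro!: sum_nonneg)
    ultimately show "P y" using d Q(2) by (auto simp: dist_real_def)
  qed
  with d show ?thesis by blast
qed

lemma addv_addv: "addv (addv x0 t h) u h = addv x0 (u + t) h"
  by (simp add: addv_def algebra_simps)

lemma deriv_line:
  assumes D: "\<forall>x\<in>U. \<forall>h. ((\<lambda>t. F (addv x t h)) has_real_derivative pinner A h (\<lambda>i s b. G i s b x)) (at 0)"
    and xt: "addv x0 t h \<in> U"
  shows "((\<lambda>u. F (addv x0 u h)) has_real_derivative pinner A h (\<lambda>i s b. G i s b (addv x0 t h))) (at t)"
proof -
  have "((\<lambda>u. F (addv (addv x0 t h) u h)) has_real_derivative pinner A h (\<lambda>i s b. G i s b (addv x0 t h))) (at 0)"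
    using D xt by blast
  then have "((\<lambda>u. F (addv x0 (u + t) h)) has_real_derivative pinner A h (\<lambda>i s b. G i s b (addv x0 t h))) (at 0)"
    by (simp add: addv_addv)
  then show ?thesis using DERIV_shift[of "\<lambda>u. F (addv x0 u h)" _ 0 t] by simp
qed

definition lineopen :: "('i \<Rightarrow> 's \<Rightarrow> 'a \<Rightarrow> real) set \<Rightarrow> bool" where
  "lineopen U \<longleftrightarrow> (\<forall>x0 h t. addv x0 t h \<in> U \<longrightarrow> eventually (\<lambda>u. addv x0 u h \<in> U) (nhds t))"

lemma deriv_transfer:
  assumes lo: "lineopen U" and eq: "\<forall>y\<in>U. Phi y = F y" and xt: "addv x0 t h \<in> U"
    and D: "((\<lambda>u. F (addv x0 u h)) has_real_derivative D) (at t)"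
  shows "((\<lambda>u. Phi (addv x0 u h)) has_real_derivative D) (at t)"
proof -
  have "eventually (\<lambda>u. addv x0 u h \<in> U) (nhds t)" using lo xt unfolding lineopen_def by blast
  then have "eventually (\<lambda>u. Phi (addv x0 u h) = F (addv x0 u h)) (nhds t)"
    by (rule eventually_mono) (use eq in auto)
  then show ?thesis using D DERIV_cong_ev[of t t "\<lambda>u. Phi (addv x0 u h)" "\<lambda>u. F (addv x0 u h)" D D] by simp
qed

lemma pinner_comm: "pinner A x y = pinner A y x"
  by (simp add: pinner_def mult.commute)

lemma pderiv_eq:
  fixes A :: "'i::finite \<Rightarrow> 'a set" and x :: "'i \<Rightarrow> 's::finite \<Rightarrow> 'a \<Rightarrow> real"
  assumes fin: "\<And>i. finite (A i)" and b: "b \<in> A i" and x: "x \<in> U" and lo: "lineopen U"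
    and eq: "\<forall>y\<in>U. Phi y = F y"
    and D: "\<forall>x\<in>U. \<forall>h. ((\<lambda>t. F (addv x t h)) has_real_derivative pinner A h (\<lambda>i s b. G i s b x)) (at 0)"
  shows "pderiv_coord Phi x i s b = G i s b x"
proof -
  define x0 where "x0 = upd_coord x i s b 0"
  define e where "e = (\<lambda>j s' c. if j = i \<and> s' = s \<and> c = b then 1 else (0::real))"
  have upd: "\<And>y. upd_coord x i s b y = addv x0 y e"
    by (intro ext) (simp add: x0_def e_def upd_coord_def addv_def)
  have xx: "addv x0 (x i s b) e = x"
    by (intro ext) (simp add: x0_def e_def upd_coord_def addv_def)
  have "((\<lambda>u. F (addv x0 u e)) has_real_derivative pinner A e (\<lambda>j s' c. G j s' c (addv x0 (x i s b) e))) (at (x i s b))"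
    using deriv_line[OF D, of x0 "x i s b" e] by (simp add: xx x)
  then have "((\<lambda>u. Phi (addv x0 u e)) has_real_derivative pinner A e (\<lambda>j s' c. G j s' c x)) (at (x i s b))"
    by (intro deriv_transfer[OF lo eq]) (simp_all add: xx x)
  moreover have "pinner A e (\<lambda>j s' c. G j s' c x) = pinner A (\<lambda>j s' c. G j s' c x) e"
    by (rule pinner_comm)
  moreover have "pinner A (\<lambda>j s' c. G j s' c x) e = G i s b x"
    unfolding e_def by (rule pinner_delta[where A=A and i=i and b=b and s=s, OF b fin])
  ultimately have dd: "((\<lambda>u. Phi (addv x0 u e)) has_real_derivative G i s b x) (at (x i s b))"
    by simp
  have "(\<lambda>y. Phi (upd_coord x i s b y)) = (\<lambda>u. Phi (addv x0 u e))"
    using upd by presburger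
  then show ?thesis
    unfolding pderiv_coord_def using DERIV_imp_deriv[OF dd] by simp
qed



definition Mm :: "('i::finite \<Rightarrow> 'a set) \<Rightarrow> ('s::finite \<Rightarrow> ('i \<Rightarrow> 'a) \<Rightarrow> 's \<Rightarrow> real)
   \<Rightarrow> ('i \<Rightarrow> 's \<Rightarrow> 'a \<Rightarrow> real) \<Rightarrow> 's \<Rightarrow> 's \<Rightarrow> real" where
  "Mm A P q s s' = (\<Sum>a\<in>joint_actions A. jointp q s a * P s a s')"

definition Rw :: "('i::finite \<Rightarrow> 'a set) \<Rightarrow> ('i \<Rightarrow> 's \<Rightarrow> ('i \<Rightarrow> 'a) \<Rightarrow> real)
   \<Rightarrow> ('i \<Rightarrow> 's \<Rightarrow> 'a \<Rightarrow> real) \<Rightarrow> 'i \<Rightarrow> 's \<Rightarrow> real" where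
  "Rw A r q i s = (\<Sum>a\<in>joint_actions A. jointp q s a * r i s a)"

definition Amat :: "('i::finite \<Rightarrow> 'a set) \<Rightarrow> ('s::finite \<Rightarrow> ('i \<Rightarrow> 'a) \<Rightarrow> 's \<Rightarrow> real)
   \<Rightarrow> ('i \<Rightarrow> 's \<Rightarrow> 'a \<Rightarrow> real) \<Rightarrow> real^'s^'s" where
  "Amat A P q = (\<chi> s s'. (if s = s' then 1 else 0) - Mm A P q s s')"

definition xsol :: "('i::finite \<Rightarrow> 'a set) \<Rightarrow> ('s::finite \<Rightarrow> ('i \<Rightarrow> 'a) \<Rightarrow> 's \<Rightarrow> real)
   \<Rightarrow> ('i \<Rightarrow> 's \<Rightarrow> ('i \<Rightarrow> 'a) \<Rightarrow> real) \<Rightarrow> 'i \<Rightarrow> ('i \<Rightarrow> 's \<Rightarrow> 'a \<Rightarrow> real) \<Rightarrow> 's \<Rightarrow> real" where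
  "xsol A P r i q k = det (\<chi> s s'. if s' = k then Rw A r q i s else Amat A P q $ s $ s') * inverse (det (Amat A P q))"

definition Fv :: "('i::finite \<Rightarrow> 'a set) \<Rightarrow> ('s::finite \<Rightarrow> ('i \<Rightarrow> 'a) \<Rightarrow> 's \<Rightarrow> real)
   \<Rightarrow> ('i \<Rightarrow> 's \<Rightarrow> ('i \<Rightarrow> 'a) \<Rightarrow> real) \<Rightarrow> ('s \<Rightarrow> real) \<Rightarrow> 'i \<Rightarrow> ('i \<Rightarrow> 's \<Rightarrow> 'a \<Rightarrow> real) \<Rightarrow> real" where
  "Fv A P r rho i q = (\<Sum>s\<in>UNIV. rho s * xsol A P r i q s)"

lemma sm_jointp: "a \<in> joint_actions A \<Longrightarrow> sm A U (\<lambda>q. jointp q s a)"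
  unfolding jointp_def joint_actions_def
  by (rule sm_prod) (auto intro: sm_proj)

lemma sm_Mm: "sm A U (\<lambda>q. Mm A P q s s')"
  unfolding Mm_def by (rule sm_sum) (auto intro: sm_mul sm_jointp sm_const)

lemma sm_Rw: "sm A U (\<lambda>q. Rw A r q i s)"
  unfolding Rw_def by (rule sm_sum) (auto intro: sm_mul sm_jointp sm_const)

lemma sm_det:
  fixes E :: "'s::finite \<Rightarrow> 's \<Rightarrow> ('i::finite \<Rightarrow> 't::finite \<Rightarrow> 'a \<Rightarrow> real) \<Rightarrow> real"
  assumes "\<And>s s'. sm A U (E s s')"
  shows "sm A U (\<lambda>q. det (\<chi> s s'. E s s' q))"
  unfolding det_def
  by (auto intro!: sm_sum sm_mul sm_const sm_prod assms)

lemma sm_if: "sm A U f \<Longrightarrow> sm A U g \<Longrightarrow> sm A U (\<lambda>q. if c then f q else g q)"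
  by (cases c) auto

lemma sm_diff: "sm A U f \<Longrightarrow> sm A U g \<Longrightarrow> sm A U (\<lambda>q. f q - g q)"
proof -
  assume f: "sm A U f" and g: "sm A U g"
  have "sm A U (\<lambda>q. f q + (-1) * g q)" by (intro sm_add sm_mul sm_const f g)
  then show ?thesis by simp
qed

lemma sm_Amat: "sm A U (\<lambda>q. Amat A P q $ s $ s')"
proof -
  have "sm A U (\<lambda>q. (if s = s' then 1 else 0) - Mm A P q s s')"
    by (rule sm_diff[OF sm_const sm_Mm])
  then show ?thesis unfolding Amat_def by simp
qed

lemma sm_det_Amat: "sm A U (\<lambda>q. det (Amat A P q))"
proof -
  have "sm A U (\<lambda>q. det (\<chi> s s'. Amat A P q $ s $ s'))"
    by (rule sm_det) (rule sm_Amat)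
  then show ?thesis by (simp add: vec_lambda_eta)
qed

lemma sm_Fv:
  assumes "\<forall>q\<in>U. det (Amat A P q) \<noteq> 0"
  shows "sm A U (Fv A P r rho i)"
proof -
  have "sm A U (\<lambda>q. Fv A P r rho i q)"
    unfolding Fv_def xsol_def
    by (intro sm_sum sm_mul sm_const sm_inv sm_det sm_if sm_Rw sm_Amat sm_det_Amat) (use assms in auto)
  then show ?thesis by simp
qed



locale game =
  fixes A :: "'i::finite \<Rightarrow> 'a set" and P :: "'s::finite \<Rightarrow> ('i \<Rightarrow> 'a) \<Rightarrow> 's \<Rightarrow> real"
    and zeta kap :: real
  assumes A_fin: "\<And>i. finite (A i)" and A_ne: "\<And>i. A i \<noteq> {}"
   and P_nonneg: "\<And>s a s'. a \<in> joint_actions A \<Longrightarrow> 0 \<le> P s a s'"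
   and stop: "\<And>s a. a \<in> joint_actions A \<Longrightarrow> 1 - (\<Sum>s'\<in>UNIV. P s a s') \<ge> zeta"
   and kap1: "1 < kap" and kapc: "(1 - zeta) * kap ^ CARD('i) < 1"
begin

definition U :: "('i \<Rightarrow> 's \<Rightarrow> 'a \<Rightarrow> real) set" where "U = {q. \<forall>i s. (\<Sum>b\<in>A i. \<bar>q i s b\<bar>) < kap}"
definition cc where "cc = (1 - zeta) * kap ^ CARD('i)"

lemma JA_ne: "joint_actions A \<noteq> {}"
  unfolding joint_actions_def using A_ne by (simp add: PiE_eq_empty_iff)

lemma JA_fin: "finite (joint_actions A)"
  unfolding joint_actions_def using A_fin by (intro finite_PiE) auto

lemma zeta_le1: "zeta \<le> 1"
proof -
  obtain a where a: "a \<in> joint_actions A" using JA_ne by blast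
  have "0 \<le> (\<Sum>s'\<in>UNIV. P (undefined::'s) a s')" using P_nonneg[OF a] by (intro sum_nonneg) auto
  with stop[OF a, of undefined] show ?thesis by linarith
qed

lemma cc_nonneg: "0 \<le> cc"
  unfolding cc_def using zeta_le1 kap1 by simp

lemma cc_lt1: "cc < 1" unfolding cc_def using kapc .

lemma sum_abs_jointp:
  assumes q: "q \<in> U"
  shows "(\<Sum>a\<in>joint_actions A. \<bar>jointp q s a\<bar>) \<le> kap ^ CARD('i)"
proof -
  have "(\<Sum>a\<in>joint_actions A. \<bar>jointp q s a\<bar>) = (\<Sum>a\<in>PiE UNIV A. \<Prod>i\<in>UNIV. \<bar>q i s (a i)\<bar>)"
    unfolding joint_actions_def jointp_def by (simp add: abs_prod)
  also have "\<dots> = (\<Prod>i\<in>UNIV. \<Sum>b\<in>A i. \<bar>q i s b\<bar>)"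
    by (rule prod_sum_PiE[symmetric]) (auto simp: A_fin)
  also have "\<dots> \<le> (\<Prod>i\<in>(UNIV::'i set). kap)"
    using q unfolding U_def by (intro prod_mono) (auto intro: sum_nonneg less_imp_le)
  also have "\<dots> = kap ^ CARD('i)" by simp
  finally show ?thesis .
qed

lemma row_bound:
  assumes q: "q \<in> U"
  shows "(\<Sum>s'\<in>UNIV. \<bar>Mm A P q s s'\<bar>) \<le> cc"
proof -
  have "(\<Sum>s'\<in>UNIV. \<bar>Mm A P q s s'\<bar>) \<le> (\<Sum>s'\<in>UNIV. \<Sum>a\<in>joint_actions A. \<bar>jointp q s a\<bar> * P s a s')"
  proof (intro sum_mono)
    fix s'
    have "\<bar>Mm A P q s s'\<bar> \<le> (\<Sum>a\<in>joint_actions A. \<bar>jointp q s a * P s a s'\<bar>)"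
      unfolding Mm_def by (rule sum_abs)
    also have "\<dots> = (\<Sum>a\<in>joint_actions A. \<bar>jointp q s a\<bar> * P s a s')"
      by (intro sum.cong refl) (simp add: abs_mult P_nonneg)
    finally show "\<bar>Mm A P q s s'\<bar> \<le> (\<Sum>a\<in>joint_actions A. \<bar>jointp q s a\<bar> * P s a s')" .
  qed
  also have "\<dots> = (\<Sum>a\<in>joint_actions A. \<bar>jointp q s a\<bar> * (\<Sum>s'\<in>UNIV. P s a s'))"
    by (simp add: sum.swap[of _ UNIV] sum_distrib_left)
  also have "\<dots> \<le> (\<Sum>a\<in>joint_actions A. \<bar>jointp q s a\<bar> * (1 - zeta))"
    proof (intro sum_mono mult_left_mono)
    fix a assume "a \<in> joint_actions A"
    from stop[OF this, of s] show "(\<Sum>s'\<in>UNIV. P s a s') \<le> 1 - zeta" by linarith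
  qed simp
  also have "\<dots> = (\<Sum>a\<in>joint_actions A. \<bar>jointp q s a\<bar>) * (1 - zeta)"
    by (simp add: sum_distrib_right)
  also have "\<dots> \<le> kap ^ CARD('i) * (1 - zeta)"
    by (rule mult_right_mono[OF sum_abs_jointp[OF q]]) (use zeta_le1 in simp)
  finally show ?thesis unfolding cc_def by (simp add: mult.commute)
qed

lemma Amat_mult: "(Amat A P q *v x) $ s = x $ s - (\<Sum>s'\<in>UNIV. Mm A P q s s' * x $ s')"
proof -
  have "(Amat A P q *v x) $ s = (\<Sum>s'\<in>UNIV. ((if s = s' then 1 else 0) - Mm A P q s s') * x $ s')"
    by (simp add: matrix_vector_mult_def Amat_def)
  also have "\<dots> = (\<Sum>s'\<in>UNIV. (if s = s' then x $ s' else 0)) - (\<Sum>s'\<in>UNIV. Mm A P q s s' * x $ s')"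
    by (simp add: left_diff_distrib sum_subtractf if_distrib[of "\<lambda>u. u * _"] cong: if_cong)
  also have "\<dots> = x $ s - (\<Sum>s'\<in>UNIV. Mm A P q s s' * x $ s')"
    by simp
  finally show ?thesis .
qed

lemma det_nz:
  assumes q: "q \<in> U"
  shows "det (Amat A P q) \<noteq> 0"
proof -
  have ker: "x = 0" if x: "Amat A P q *v x = 0" for x :: "real^'s"
  proof -
    define m where "m = Max (range (\<lambda>s. \<bar>x $ s\<bar>))"
    have le_m: "\<bar>x $ s\<bar> \<le> m" for s unfolding m_def by (rule Max_ge) auto
    have "\<bar>x $ s\<bar> \<le> cc * m" for s
    proof -
      have "x $ s = (\<Sum>s'\<in>UNIV. Mm A P q s s' * x $ s')"
        using arg_cong[OF x, of "\<lambda>v. v $ s"] Amat_mult[of q x s] by simp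
      then have "\<bar>x $ s\<bar> \<le> (\<Sum>s'\<in>UNIV. \<bar>Mm A P q s s'\<bar> * \<bar>x $ s'\<bar>)"
        by (simp add: sum_abs[THEN order_trans] abs_mult)
      also have "\<dots> \<le> (\<Sum>s'\<in>UNIV. \<bar>Mm A P q s s'\<bar> * m)"
        by (intro sum_mono mult_left_mono le_m) auto
      also have "\<dots> = (\<Sum>s'\<in>UNIV. \<bar>Mm A P q s s'\<bar>) * m" by (simp add: sum_distrib_right)
      also have "\<dots> \<le> cc * m"
        by (rule mult_right_mono[OF row_bound[OF q]]) (use le_m[of undefined] in linarith)
      finally show ?thesis .
    qed
    moreover have "m \<in> range (\<lambda>s. \<bar>x $ s\<bar>)" unfolding m_def by (rule Max_in) auto
    then obtain s0 where "m = \<bar>x $ s0\<bar>" by blast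
    ultimately have "m \<le> cc * m" by metis
    then have "m \<le> 0" using cc_lt1 le_m[of undefined]
      by (metis abs_ge_zero dual_order.trans mult_le_cancel_right1 not_less)
    then have "\<And>s. x $ s = 0" using le_m by (meson abs_le_zero_iff order_trans)
    then show ?thesis by (simp add: vec_eq_iff)
  qed
  have "inj (\<lambda>x. Amat A P q *v x)"
  proof (rule injI)
    fix x y assume "Amat A P q *v x = Amat A P q *v y"
    then have "Amat A P q *v (x - y) = 0" by (simp add: matrix_vector_mult_diff_distrib)
    then have "x - y = 0" by (rule ker)
    then show "x = y" by simp
  qed
  then show ?thesis
    using det_nz_iff_inj[of "\<lambda>x. Amat A P q *v x"] by simp
qed

end


context game begin

lemma sdist_Mm: "sdist A P rho q (Suc t) s' = (\<Sum>s\<in>UNIV. sdist A P rho q t s * Mm A P q s s')"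
  by (simp add: Mm_def)

lemma sdist_bound:
  assumes q: "q \<in> U"
  shows "(\<Sum>s\<in>UNIV. \<bar>sdist A P rho q t s\<bar>) \<le> cc ^ t * (\<Sum>s\<in>UNIV. \<bar>rho s\<bar>)"
proof (induction t)
  case 0 then show ?case by simp
next
  case (Suc t)
  have "(\<Sum>s'\<in>UNIV. \<bar>sdist A P rho q (Suc t) s'\<bar>) \<le> (\<Sum>s'\<in>UNIV. \<Sum>s\<in>UNIV. \<bar>sdist A P rho q t s\<bar> * \<bar>Mm A P q s s'\<bar>)"
    unfolding sdist_Mm by (intro sum_mono order_trans[OF sum_abs]) (simp add: abs_mult)
  also have "\<dots> = (\<Sum>s\<in>UNIV. \<bar>sdist A P rho q t s\<bar> * (\<Sum>s'\<in>UNIV. \<bar>Mm A P q s s'\<bar>))"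
    unfolding sum_distrib_left by (rule sum.swap)
  also have "\<dots> \<le> (\<Sum>s\<in>UNIV. \<bar>sdist A P rho q t s\<bar> * cc)"
    by (intro sum_mono mult_left_mono row_bound[OF q]) auto
  also have "\<dots> = cc * (\<Sum>s\<in>UNIV. \<bar>sdist A P rho q t s\<bar>)"
    by (simp add: sum_distrib_left mult.commute)
  also have "\<dots> \<le> cc * (cc ^ t * (\<Sum>s\<in>UNIV. \<bar>rho s\<bar>))"
    by (rule mult_left_mono[OF Suc cc_nonneg])
  finally show ?case by (simp add: mult.assoc)
qed

lemma V_eq:
  assumes q: "q \<in> U"
  shows "Vval A P r rho q i = Fv A P r rho i q"
proof -
  define xv :: "real^'s" where "xv = (\<chi> k. xsol A P r i q k)"
  define Rv :: "real^'s" where "Rv = (\<chi> s. Rw A r q i s)"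
  have d0: "det (Amat A P q) \<noteq> 0" by (rule det_nz[OF q])
  have Rv: "\<And>s. Rv $ s = Rw A r q i s" by (simp add: Rv_def)
  have "Amat A P q *v xv = Rv"
    unfolding cramer[OF d0] xv_def xsol_def Rv by (simp add: divide_inverse)
  then have xeq: "xsol A P r i q s = Rw A r q i s + (\<Sum>s'\<in>UNIV. Mm A P q s s' * xsol A P r i q s')" for s
    using Amat_mult[of q xv s] unfolding xv_def Rv_def by (simp add: algebra_simps)
  define a where "a t = (\<Sum>s\<in>UNIV. sdist A P rho q t s * xsol A P r i q s)" for t
  have step: "(\<Sum>s\<in>UNIV. sdist A P rho q t s * Rw A r q i s) = a t - a (Suc t)" for t
  proof -
    have "a (Suc t) = (\<Sum>s'\<in>UNIV. (\<Sum>s\<in>UNIV. sdist A P rho q t s * Mm A P q s s') * xsol A P r i q s')"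
      unfolding a_def sdist_Mm ..
    also have "\<dots> = (\<Sum>s\<in>UNIV. sdist A P rho q t s * (\<Sum>s'\<in>UNIV. Mm A P q s s' * xsol A P r i q s'))"
      unfolding sum_distrib_right sum_distrib_left mult.assoc by (rule sum.swap)
    finally have "a (Suc t) = \<dots>" .
    moreover have "a t = (\<Sum>s\<in>UNIV. sdist A P rho q t s * Rw A r q i s) +
        (\<Sum>s\<in>UNIV. sdist A P rho q t s * (\<Sum>s'\<in>UNIV. Mm A P q s s' * xsol A P r i q s'))"
      unfolding a_def by (subst xeq) (simp add: distrib_left sum.distrib)
    ultimately show ?thesis by simp
  qed
  define B where "B = (\<Sum>s\<in>UNIV. \<bar>xsol A P r i q s\<bar>)"
  define R0 where "R0 = (\<Sum>s\<in>UNIV. \<bar>rho s\<bar>)"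
  have abound: "norm (a t) \<le> cc ^ t * R0 * B" for t
  proof -
    have "norm (a t) \<le> (\<Sum>s\<in>UNIV. \<bar>sdist A P rho q t s\<bar> * \<bar>xsol A P r i q s\<bar>)"
      unfolding a_def real_norm_def by (intro order_trans[OF sum_abs]) (simp add: abs_mult)
    also have "\<dots> \<le> (\<Sum>s\<in>UNIV. \<bar>sdist A P rho q t s\<bar> * B)"
      unfolding B_def by (intro sum_mono mult_left_mono member_le_sum) auto
    also have "\<dots> = (\<Sum>s\<in>UNIV. \<bar>sdist A P rho q t s\<bar>) * B" by (simp add: sum_distrib_right)
    also have "\<dots> \<le> cc ^ t * R0 * B"
      unfolding R0_def by (rule mult_right_mono[OF sdist_bound[OF q]]) (auto simp: B_def intro: sum_nonneg)
    finally show ?thesis .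
  qed
  have "(\<lambda>t. cc ^ t * R0 * B) \<longlonglongrightarrow> 0 * R0 * B"
    using cc_nonneg cc_lt1 by (intro tendsto_mult tendsto_const LIMSEQ_power_zero) simp
  then have lim: "(\<lambda>t. cc ^ t * R0 * B) \<longlonglongrightarrow> 0" by simp
  have "\<forall>t. norm (a t) \<le> cc ^ t * R0 * B" using abound by blast
  from Lim_null_comparison[OF always_eventually[OF this] lim] have "a \<longlonglongrightarrow> 0" .
  then have "(\<lambda>t. a t - a (Suc t)) sums (a 0 - 0)" by (rule telescope_sums')
  then have "(\<lambda>t. \<Sum>s\<in>UNIV. sdist A P rho q t s * Rw A r q i s) sums (a 0)"
    by (simp add: step)
  moreover have "a 0 = Fv A P r rho i q" unfolding a_def Fv_def by simp
  ultimately show ?thesis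
    unfolding Vval_def Rw_def[symmetric] by (simp add: sums_iff)
qed

lemma pol_U: "(policies A :: ('i \<Rightarrow> 's \<Rightarrow> 'a \<Rightarrow> real) set) \<subseteq> U"
proof
  fix q :: "'i \<Rightarrow> 's \<Rightarrow> 'a \<Rightarrow> real" assume q: "q \<in> policies A"
  have "(\<Sum>b\<in>A i. \<bar>q i s b\<bar>) = 1" for i s
    using q unfolding policies_def by (simp add: sum.cong[OF refl, of _ "\<lambda>b. \<bar>q i s b\<bar>" "q i s"])
  then show "q \<in> U" unfolding U_def using kap1 by simp
qed

lemma pol_convex:
  assumes p: "p \<in> policies A" and q: "q \<in> policies A" and t: "0 \<le> t" "t \<le> 1"
  shows "addv p t (pdiff q p) \<in> policies A"
proof -
  have e: "addv p t (pdiff q p) i s b = (1 - t) * p i s b + t * q i s b" for i s b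
    by (simp add: addv_def pdiff_def algebra_simps)
  show ?thesis
    unfolding policies_def
  proof (intro CollectI allI conjI ballI impI)
    fix i s
    show "\<And>b. b \<in> A i \<Longrightarrow> 0 \<le> addv p t (pdiff q p) i s b"
      unfolding e using p q t unfolding policies_def by (auto intro!: add_nonneg_nonneg mult_nonneg_nonneg)
    show "(\<Sum>b\<in>A i. addv p t (pdiff q p) i s b) = 1"
      unfolding e using p q unfolding policies_def by (simp add: sum.distrib sum_distrib_left[symmetric])
    show "\<And>b. b \<notin> A i \<Longrightarrow> addv p t (pdiff q p) i s b = 0"
      unfolding e using p q unfolding policies_def by simp
  qed
qed

lemma lineopen_U: "lineopen U"
  unfolding lineopen_def
proof (intro allI impI)
  fix x0 h t assume xt: "addv x0 t h \<in> U"
  have "eventually (\<lambda>u. (\<Sum>b\<in>A i. \<bar>addv x0 u h i s b\<bar>) < kap) (nhds t)" for i s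
  proof -
    have c: "isCont (\<lambda>u. \<Sum>b\<in>A i. \<bar>x0 i s b + u * h i s b\<bar>) t"
      by (intro continuous_intros)
    have "(\<Sum>b\<in>A i. \<bar>addv x0 t h i s b\<bar>) < kap" using xt unfolding U_def by blast
    then have "eventually (\<lambda>u. (\<Sum>b\<in>A i. \<bar>x0 i s b + u * h i s b\<bar>) < kap) (at t)"
      using c unfolding isCont_def addv_def by (intro order_tendstoD(2)) auto
    moreover have "(\<Sum>b\<in>A i. \<bar>x0 i s b + t * h i s b\<bar>) < kap" using xt unfolding U_def addv_def by blast
    ultimately show ?thesis unfolding eventually_nhds_conv_at addv_def by simp
  qed
  then have "\<forall>i. eventually (\<lambda>u. \<forall>s. (\<Sum>b\<in>A i. \<bar>addv x0 u h i s b\<bar>) < kap) (nhds t)"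
    by (simp add: eventually_all_finite)
  then have "eventually (\<lambda>u. \<forall>i s. (\<Sum>b\<in>A i. \<bar>addv x0 u h i s b\<bar>) < kap) (nhds t)"
    by (simp add: eventually_all_finite)
  then show "eventually (\<lambda>u. addv x0 u h \<in> U) (nhds t)" unfolding U_def by simp
qed

end


definition Qf :: "('i::finite \<Rightarrow> 'a set) \<Rightarrow> ('i \<Rightarrow> 's::finite \<Rightarrow> 'a \<Rightarrow> 'i \<Rightarrow> 's \<Rightarrow> 'a \<Rightarrow> real)
   \<Rightarrow> ('i \<Rightarrow> 's \<Rightarrow> 'a \<Rightarrow> real) \<Rightarrow> real" where
  "Qf A C x = (\<Sum>i\<in>UNIV. \<Sum>s\<in>UNIV. \<Sum>b\<in>A i. \<Sum>j\<in>UNIV. \<Sum>s'\<in>UNIV. \<Sum>c\<in>A j.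
        x i s b * C i s b j s' c * x j s' c)"

lemma Qf_scale: "Qf A C (\<lambda>i s b. t * x i s b) = t\<^sup>2 * Qf A C x"
  unfolding Qf_def by (simp add: sum_distrib_left power2_eq_square algebra_simps)

lemma pinner_scale: "pinner A (\<lambda>i s b. t * x i s b) (\<lambda>i s b. t * x i s b) = t\<^sup>2 * pinner A x x"
  unfolding pinner_def by (simp add: sum_distrib_left power2_eq_square algebra_simps)

lemma pnorm_scale: "pnorm A (\<lambda>i s b. t * x i s b) = \<bar>t\<bar> * pnorm A x"
  unfolding pnorm_def pinner_scale by (simp add: real_sqrt_mult)

lemma pnorm_eq0:
  fixes q p :: "'i::finite \<Rightarrow> 's::finite \<Rightarrow> 'a \<Rightarrow> real"
  assumes fin: "\<And>i. finite (A i)" and q: "q \<in> policies A" and p: "p \<in> policies A"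
    and n: "pnorm A (pdiff q p) = 0"
  shows "q = p"
proof (intro ext)
  fix i s b
  show "q i s b = p i s b"
  proof (cases "b \<in> A i")
    case True
    have "\<bar>pdiff q p i s b\<bar> \<le> 0" using coord_le_pnorm[where A=A and i=i and b=b and d="pdiff q p" and s=s, OF fin True] n by simp
    then show ?thesis by (simp add: pdiff_def)
  next
    case False then show ?thesis using q p unfolding policies_def by simp
  qed
qed

definition unc :: "('i \<Rightarrow> 's \<Rightarrow> 'a \<Rightarrow> real) \<Rightarrow> ('i \<times> 's \<times> 'a \<Rightarrow> real)" where
  "unc q = (\<lambda>(i, s, b). q i s b)"
definition cur :: "('i \<times> 's \<times> 'a \<Rightarrow> real) \<Rightarrow> ('i \<Rightarrow> 's \<Rightarrow> 'a \<Rightarrow> real)" where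
  "cur f = (\<lambda>i s b. f (i, s, b))"

lemma cur_unc[simp]: "cur (unc q) = q" by (simp add: cur_def unc_def)

lemma cont_coord: "continuous_on UNIV (\<lambda>f::'k \<Rightarrow> real. f k)"
  by simp

lemma cont_Qf: "continuous_on UNIV (\<lambda>f. Qf A C (pdiff (cur f) p))"
  unfolding Qf_def pdiff_def cur_def
  by (intro continuous_intros cont_coord)

lemma cont_pnorm: "continuous_on UNIV (\<lambda>f. pnorm A (pdiff (cur f) p))"
  unfolding pnorm_def pinner_def pdiff_def cur_def
  by (intro continuous_intros cont_coord)

lemma Qf_self[simp]: "Qf A C (pdiff p p) = 0"
  by (simp add: Qf_def pdiff_def)

lemma pnorm_self[simp]: "pnorm A (pdiff p p) = 0"
  by (simp add: pnorm_def pinner_def pdiff_def)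

lemma quad_bound:
  fixes A :: "'i::finite \<Rightarrow> 'a set" and p :: "'i \<Rightarrow> 's::finite \<Rightarrow> 'a \<Rightarrow> real"
  assumes fin: "\<And>i. finite (A i)" and p: "p \<in> policies A"
    and neg: "\<forall>q\<in>policies A - {p}. Qf A C (pdiff q p) < 0"
  shows "\<exists>m>0. \<forall>q\<in>policies A. Qf A C (pdiff q p) \<le> - m * (pnorm A (pdiff q p))\<^sup>2"
proof (cases "policies A - {p} = {}")
  case True
  then have "\<forall>q\<in>policies A. q = p" by blast
  then show ?thesis
    by (intro exI[of _ 1]) simp
next
  case False
  define Pos where "Pos = {p i s b | i s b. b \<in> A i \<and> p i s b > 0}"
  have finPos: "finite Pos"
  proof -
    have "Pos \<subseteq> (\<lambda>(i, s, b). p i s b) ` (SIGMA i:UNIV. SIGMA s:UNIV. A i)"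
      unfolding Pos_def by (auto intro!: image_eqI[where x="(_, _, _)"])
    moreover have "finite (SIGMA i:UNIV. SIGMA s:(UNIV::'s set). A i)" using fin by auto
    ultimately show ?thesis by (meson finite_surj)
  qed
  define rho0 where "rho0 = Min (insert 1 Pos)"
  have rho0_pos: "rho0 > 0" unfolding rho0_def using finPos by (auto simp: Pos_def)
  have rho0_le: "rho0 \<le> p i s b" if "b \<in> A i" "p i s b > 0" for i s b
    unfolding rho0_def using finPos that by (intro Min_le) (auto simp: Pos_def)
  have scale: "addv p (rho0 / pnorm A (pdiff q p)) (pdiff q p) \<in> policies A \<and>
      pdiff (addv p (rho0 / pnorm A (pdiff q p)) (pdiff q p)) p = (\<lambda>i s b. (rho0 / pnorm A (pdiff q p)) * pdiff q p i s b) \<and>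
      pnorm A (pdiff q p) > 0"
    if q: "q \<in> policies A" "q \<noteq> p" for q
  proof -
    define n where "n = pnorm A (pdiff q p)"
    define t where "t = rho0 / n"
    have n0: "n \<ge> 0" unfolding n_def by (rule pnorm_nonneg[OF fin])
    have "n \<noteq> 0" using pnorm_eq0[OF fin q(1) p] q(2) unfolding n_def by blast
    with n0 have npos: "n > 0" by simp
    then have t0: "t > 0" using rho0_pos unfolding t_def by simp
    have tn: "t * n = rho0" unfolding t_def using npos by simp
    have e: "addv p t (pdiff q p) i s b = p i s b + t * (q i s b - p i s b)" for i s b
      by (simp add: addv_def pdiff_def)
    have mem: "addv p t (pdiff q p) \<in> policies A"
      unfolding policies_def
    proof (intro CollectI allI conjI ballI impI)
      fix i s
      show "\<And>b. b \<in> A i \<Longrightarrow> 0 \<le> addv p t (pdiff q p) i s b"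
      proof -
        fix b assume b: "b \<in> A i"
        show "0 \<le> addv p t (pdiff q p) i s b"
        proof (cases "p i s b > 0")
          case True
          have "\<bar>pdiff q p i s b\<bar> \<le> n" unfolding n_def by (rule coord_le_pnorm[where A=A and i=i and b=b, OF fin b])
          then have "t * \<bar>q i s b - p i s b\<bar> \<le> t * n" using t0 by (simp add: pdiff_def)
          moreover have "- (t * \<bar>q i s b - p i s b\<bar>) \<le> t * (q i s b - p i s b)"
          proof -
            have "- \<bar>q i s b - p i s b\<bar> \<le> q i s b - p i s b" by linarith
            then have "t * (- \<bar>q i s b - p i s b\<bar>) \<le> t * (q i s b - p i s b)"
              using t0 by (intro mult_left_mono) auto
            then show ?thesis by simp
          qed
          ultimately show ?thesis unfolding e using tn rho0_le[OF b True] by linarith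
        next
          case False
          then have "p i s b = 0" using p b unfolding policies_def by force
          moreover have "q i s b \<ge> 0" using q b unfolding policies_def by blast
          ultimately show ?thesis unfolding e using t0 by simp
        qed
      qed
      show "(\<Sum>b\<in>A i. addv p t (pdiff q p) i s b) = 1"
        unfolding e using p q unfolding policies_def
        by (simp add: sum.distrib sum_distrib_left[symmetric] sum_subtractf right_diff_distrib)
      show "\<And>b. b \<notin> A i \<Longrightarrow> addv p t (pdiff q p) i s b = 0"
        unfolding e using p q unfolding policies_def by simp
    qed
    have "pdiff (addv p t (pdiff q p)) p = (\<lambda>i s b. t * pdiff q p i s b)"
      by (simp add: addv_def pdiff_def fun_eq_iff)
    with mem npos show ?thesis unfolding t_def n_def by simp
  qed
  define Bx where "Bx (k :: 'i \<times> 's \<times> 'a) = (if k \<in> (SIGMA i:UNIV. SIGMA s:UNIV. A i) then {0..1} else {0::real})" for k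
  define S where "S = PiE UNIV Bx \<inter> {f :: 'i \<times> 's \<times> 'a \<Rightarrow> real. \<forall>i s. (\<Sum>b\<in>A i. f (i, s, b)) = 1} \<inter> {f. pnorm A (pdiff (cur f) p) = rho0}"
  have cB: "compact (PiE UNIV Bx)"
  proof -
    have "compactin (product_topology (\<lambda>_. euclidean) UNIV) (PiE UNIV Bx)"
      unfolding compactin_PiE by (auto simp: Bx_def)
    then show ?thesis by (simp add: euclidean_product_topology)
  qed
  have cl1: "closed {f :: 'i \<times> 's \<times> 'a \<Rightarrow> real. \<forall>i s. (\<Sum>b\<in>A i. f (i, s, b)) = 1}"
    by (intro closed_Collect_all closed_Collect_eq continuous_intros cont_coord)
  have cl2: "closed {f. pnorm A (pdiff (cur f) p) = rho0}"
    by (intro closed_Collect_eq cont_pnorm continuous_intros)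
  have cS: "compact S" unfolding S_def using cB cl1 cl2 by (intro compact_Int_closed closed_Int) auto
  have inS: "unc q \<in> S" if q: "q \<in> policies A" and nq: "pnorm A (pdiff q p) = rho0" for q
  proof -
    have le1: "q i s b \<le> 1" if "b \<in> A i" for i s b
    proof -
      have "q i s b \<le> (\<Sum>c\<in>A i. q i s c)"
        using q fin that unfolding policies_def by (intro member_le_sum) auto
      then show ?thesis using q unfolding policies_def by simp
    qed
    have "unc q k \<in> Bx k" for k
      using q le1 unfolding Bx_def policies_def unc_def by (cases k) auto
    then have "unc q \<in> PiE UNIV Bx" by (simp add: PiE_iff)
    moreover have "\<forall>i s. (\<Sum>b\<in>A i. unc q (i, s, b)) = 1"
      using q unfolding policies_def unc_def by simp
    ultimately show ?thesis unfolding S_def using nq by simp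
  qed
  have fromS: "cur f \<in> policies A - {p} \<and> pnorm A (pdiff (cur f) p) = rho0" if "f \<in> S" for f
  proof -
    have B: "\<forall>i s b. f (i, s, b) \<in> (if b \<in> A i then {0..1} else {0})"
      using that unfolding S_def Bx_def by (auto simp: PiE_iff)
    have pol: "cur f \<in> policies A"
      unfolding policies_def cur_def
    proof (intro CollectI allI conjI ballI impI)
      fix i s
      show "\<And>b. b \<in> A i \<Longrightarrow> 0 \<le> f (i, s, b)" using B by (metis atLeastAtMost_iff)
      show "\<And>b. b \<notin> A i \<Longrightarrow> f (i, s, b) = 0" using B by (metis singletonD)
      show "(\<Sum>b\<in>A i. f (i, s, b)) = 1" using that unfolding S_def by blast
    qed
    have n: "pnorm A (pdiff (cur f) p) = rho0" using that unfolding S_def by blast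
    have "cur f \<noteq> p" using n rho0_pos by (auto simp: pdiff_def pnorm_def pinner_def)
    with pol n show ?thesis by blast
  qed
  from False obtain q0 where q0: "q0 \<in> policies A" "q0 \<noteq> p" by blast
  have Sne: "S \<noteq> {}"
  proof -
    define n where "n = pnorm A (pdiff q0 p)"
    define q' where "q' = addv p (rho0 / n) (pdiff q0 p)"
    have sc: "q' \<in> policies A" "pdiff q' p = (\<lambda>i s b. (rho0 / n) * pdiff q0 p i s b)" "n > 0"
      using scale[OF q0] unfolding q'_def n_def by auto
    have "pnorm A (pdiff q' p) = rho0" unfolding sc(2) pnorm_scale using sc(3) rho0_pos
      by (simp add: n_def)
    then have "unc q' \<in> S" by (intro inS sc(1))
    then show ?thesis by blast
  qed
  obtain f0 where f0: "f0 \<in> S" "\<forall>f\<in>S. Qf A C (pdiff (cur f) p) \<le> Qf A C (pdiff (cur f0) p)"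
    using continuous_attains_sup[OF cS Sne continuous_on_subset[OF cont_Qf]] by blast
  define m where "m = - Qf A C (pdiff (cur f0) p) / rho0\<^sup>2"
  have "Qf A C (pdiff (cur f0) p) < 0" using neg fromS[OF f0(1)] by blast
  then have mpos: "m > 0" unfolding m_def using rho0_pos by (simp add: divide_neg_pos)
  show ?thesis
  proof (intro exI[of _ m] conjI mpos ballI)
    fix q :: "'i \<Rightarrow> 's \<Rightarrow> 'a \<Rightarrow> real" assume q: "q \<in> policies A"
    show "Qf A C (pdiff q p) \<le> - m * (pnorm A (pdiff q p))\<^sup>2"
    proof (cases "q = p")
      case True
      then show ?thesis by simp
    next
      case False
      define n where "n = pnorm A (pdiff q p)"
      define t where "t = rho0 / n"
      define q' where "q' = addv p t (pdiff q p)"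
      have sc: "q' \<in> policies A" "pdiff q' p = (\<lambda>i s b. t * pdiff q p i s b)" "n > 0"
        using scale[OF q False] unfolding q'_def t_def n_def by auto
      have t0: "t > 0" unfolding t_def using sc(3) rho0_pos by simp
      have "pnorm A (pdiff q' p) = rho0" unfolding sc(2) pnorm_scale using t0 sc(3) rho0_pos
        by (simp add: t_def n_def)
      then have "unc q' \<in> S" by (intro inS sc(1))
      then have "Qf A C (pdiff q' p) \<le> Qf A C (pdiff (cur f0) p)" using f0(2) by fastforce
      then have "t\<^sup>2 * Qf A C (pdiff q p) \<le> - m * rho0\<^sup>2"
        unfolding sc(2) Qf_scale m_def using rho0_pos by simp
      moreover have "rho0 = t * n" unfolding t_def using sc(3) by simp
      ultimately have "t\<^sup>2 * Qf A C (pdiff q p) \<le> t\<^sup>2 * (- m * n\<^sup>2)"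
        by (simp add: power_mult_distrib algebra_simps)
      then have "Qf A C (pdiff q p) \<le> - m * n\<^sup>2"
        by (rule mult_left_le_imp_le) (use t0 in simp)
      then show ?thesis unfolding n_def .
    qed
  qed
qed



definition KK :: "('i::finite \<Rightarrow> 'a set) \<Rightarrow> ('i \<times> 's::finite \<times> 'a) set" where
  "KK A = (SIGMA i:UNIV. SIGMA s:UNIV. A i)"

lemma finite_KK: "(\<And>i. finite (A i)) \<Longrightarrow> finite (KK A)"
  unfolding KK_def by auto

lemma tri_sum:
  fixes A :: "'i::finite \<Rightarrow> 'a set"
  assumes fin: "\<And>i. finite (A i)"
  shows "(\<Sum>i\<in>UNIV. \<Sum>s\<in>(UNIV::'s::finite set). \<Sum>b\<in>A i. f i s b) = (\<Sum>k\<in>KK A. f (fst k) (fst (snd k)) (snd (snd k)))"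
proof -
  have "(\<Sum>i\<in>UNIV. \<Sum>s\<in>(UNIV::'s set). \<Sum>b\<in>A i. f i s b) = (\<Sum>i\<in>UNIV. \<Sum>z\<in>(SIGMA s:(UNIV::'s set). A i). f i (fst z) (snd z))"
    by (intro sum.cong refl) (simp add: sum.Sigma fin split_def)
  also have "\<dots> = (\<Sum>k\<in>KK A. f (fst k) (fst (snd k)) (snd (snd k)))"
    unfolding KK_def by (subst sum.Sigma) (auto simp: fin split_def)
  finally show ?thesis .
qed

definition L1 :: "('i::finite \<Rightarrow> 'a set) \<Rightarrow> ('i \<Rightarrow> 's::finite \<Rightarrow> 'a \<Rightarrow> real) \<Rightarrow> real" where
  "L1 A d = (\<Sum>i\<in>UNIV. \<Sum>s\<in>UNIV. \<Sum>b\<in>A i. \<bar>d i s b\<bar>)"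

lemma pnorm_L2:
  assumes fin: "\<And>i. finite (A i)"
  shows "pnorm A d = L2_set (\<lambda>k. d (fst k) (fst (snd k)) (snd (snd k))) (KK A)"
  unfolding pnorm_def pinner_def L2_set_def tri_sum[OF fin] by (simp add: power2_eq_square)

lemma L1_KK:
  assumes fin: "\<And>i. finite (A i)"
  shows "L1 A d = (\<Sum>k\<in>KK A. \<bar>d (fst k) (fst (snd k)) (snd (snd k))\<bar>)"
  unfolding L1_def tri_sum[OF fin] ..

lemma pnorm_le_L1:
  assumes fin: "\<And>i. finite (A i)"
  shows "pnorm A d \<le> L1 A d"
  unfolding pnorm_L2[OF fin] L1_KK[OF fin] by (rule L2_set_le_sum_abs)

lemma L1_le_pnorm:
  fixes A :: "'i::finite \<Rightarrow> 'a set" and d :: "'i \<Rightarrow> 's::finite \<Rightarrow> 'a \<Rightarrow> real"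
  assumes fin: "\<And>i. finite (A i)"
  shows "L1 A d \<le> sqrt (real (card (KK A :: ('i \<times> 's \<times> 'a) set))) * pnorm A d"
proof -
  define g where "g = (\<lambda>k::'i \<times> 's \<times> 'a. d (fst k) (fst (snd k)) (snd (snd k)))"
  define one where "one = (\<lambda>k::'i \<times> 's \<times> 'a. 1::real)"
  have "L1 A d = (\<Sum>k\<in>KK A. \<bar>g k\<bar> * \<bar>one k\<bar>)"
    unfolding L1_KK[OF fin] g_def one_def by simp
  also have "\<dots> \<le> L2_set g (KK A) * L2_set one (KK A)"
    by (rule L2_set_mult_ineq)
  also have "\<dots> = sqrt (real (card (KK A :: ('i \<times> 's \<times> 'a) set))) * pnorm A d"
    unfolding pnorm_L2[OF fin] g_def one_def L2_set_constant by simp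
  finally show ?thesis .
qed

lemma L1_nonneg: "0 \<le> L1 A d"
  unfolding L1_def by (auto intro!: sum_nonneg)

lemma pinner_single:
  fixes A :: "'i::finite \<Rightarrow> 'a set" and X :: "'i \<Rightarrow> 's::finite \<Rightarrow> 'a \<Rightarrow> real"
  shows "pinner A X (\<lambda>j s' c. if j = i \<and> s' = s then Y c else 0) = (\<Sum>c\<in>A i. X i s c * Y c)"
proof -
  have "pinner A X (\<lambda>j s' c. if j = i \<and> s' = s then Y c else 0)
     = (\<Sum>j\<in>UNIV. \<Sum>s'\<in>UNIV. if j = i \<and> s' = s then (\<Sum>c\<in>A j. X j s' c * Y c) else 0)"
    unfolding pinner_def by (intro sum.cong refl) auto
  also have "\<dots> = (\<Sum>j\<in>UNIV. if j = i then (\<Sum>c\<in>A j. X j s c * Y c) else 0)"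
    by (intro sum.cong refl) (simp add: sum.delta')
  also have "\<dots> = (\<Sum>c\<in>A i. X i s c * Y c)" by (simp add: sum.delta')
  finally show ?thesis .
qed

lemma row_strict:
  fixes X qr pr :: "'a \<Rightarrow> real"
  assumes B: "finite B" "bs \<in> B" and q0: "\<forall>c\<in>B. 0 \<le> qr c" and q1: "(\<Sum>c\<in>B. qr c) = 1"
    and pr: "\<forall>c\<in>B. pr c = (if c = bs then 1 else 0)"
    and gap: "\<forall>c\<in>B. c \<noteq> bs \<longrightarrow> X c - X bs \<le> - c0" and c0: "0 \<le> c0"
  shows "(\<Sum>c\<in>B. X c * (qr c - pr c)) \<le> - (c0 / 2) * (\<Sum>c\<in>B. \<bar>qr c - pr c\<bar>)"
proof -
  define w where "w c = (if c = bs then 0 else qr c)" for c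
  have qbs: "qr bs \<le> 1"
  proof -
    have "qr bs \<le> (\<Sum>c\<in>B. qr c)" using B q0 by (intro member_le_sum) auto
    then show ?thesis using q1 by simp
  qed
  have sumd: "(\<Sum>c\<in>B. qr c - pr c) = 0"
    using q1 pr B by (simp add: sum_subtractf sum.cong[of B B pr "\<lambda>c. if c = bs then 1 else 0"] sum.delta')
  have W: "(\<Sum>c\<in>B. w c) = 1 - qr bs"
  proof -
    have "(\<Sum>c\<in>B. qr c) = (\<Sum>c\<in>B. w c) + (\<Sum>c\<in>B. if c = bs then qr c else 0)"
      unfolding w_def sum.distrib[symmetric] by (intro sum.cong refl) simp
    then show ?thesis using q1 B by (simp add: sum.delta')
  qed
  have "(\<Sum>c\<in>B. X c * (qr c - pr c)) = (\<Sum>c\<in>B. X c * (qr c - pr c)) - X bs * (\<Sum>c\<in>B. qr c - pr c)"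
    using sumd by simp
  also have "\<dots> = (\<Sum>c\<in>B. X c * (qr c - pr c)) - (\<Sum>c\<in>B. X bs * (qr c - pr c))"
    by (simp add: sum_distrib_left)
  also have "\<dots> = (\<Sum>c\<in>B. (X c - X bs) * (qr c - pr c))"
    by (simp add: left_diff_distrib sum_subtractf sum_distrib_left)
  also have "\<dots> \<le> (\<Sum>c\<in>B. - c0 * w c)"
  proof (intro sum_mono)
    fix c assume c: "c \<in> B"
    show "(X c - X bs) * (qr c - pr c) \<le> - c0 * w c"
    proof (cases "c = bs")
      case True then show ?thesis by (simp add: w_def)
    next
      case False
      then have "(X c - X bs) * qr c \<le> - c0 * qr c"
        using gap c q0 by (intro mult_right_mono) auto
      then show ?thesis using False pr c by (simp add: w_def)
    qed
  qed
  also have "\<dots> = - c0 * (1 - qr bs)" unfolding sum_distrib_left[symmetric] W ..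
  also have "\<dots> = - (c0 / 2) * (\<Sum>c\<in>B. \<bar>qr c - pr c\<bar>)"
  proof -
    have "(\<Sum>c\<in>B. \<bar>qr c - pr c\<bar>) = (\<Sum>c\<in>B. w c + (if c = bs then 1 - qr bs else 0))"
    proof (intro sum.cong refl)
      fix c assume c: "c \<in> B"
      show "\<bar>qr c - pr c\<bar> = w c + (if c = bs then 1 - qr bs else 0)"
        using pr c q0 qbs by (cases "c = bs") (auto simp: w_def)
    qed
    also have "\<dots> = 2 * (1 - qr bs)" using W B by (simp add: sum.distrib sum.delta')
    finally show ?thesis by simp
  qed
  finally show ?thesis .
qed



lemma pinner_diff: "pinner A X d - pinner A Y d = pinner A (\<lambda>i s b. X i s b - Y i s b) d"
  unfolding pinner_def by (simp add: sum_subtractf left_diff_distrib)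

lemma pinner_err:
  assumes "\<forall>i s. \<forall>b\<in>A i. \<bar>E i s b\<bar> \<le> e"
  shows "pinner A E d \<le> e * L1 A d"
proof -
  have "pinner A E d \<le> (\<Sum>i\<in>UNIV. \<Sum>s\<in>UNIV. \<Sum>b\<in>A i. e * \<bar>d i s b\<bar>)"
    unfolding pinner_def
  proof (intro sum_mono)
    fix i s b assume b: "b \<in> A i"
    have "E i s b * d i s b \<le> \<bar>E i s b\<bar> * \<bar>d i s b\<bar>" by (simp add: abs_mult[symmetric])
    also have "\<dots> \<le> e * \<bar>d i s b\<bar>" using assms b by (intro mult_right_mono) auto
    finally show "E i s b * d i s b \<le> e * \<bar>d i s b\<bar>" .
  qed
  also have "\<dots> = e * L1 A d" unfolding L1_def by (simp add: sum_distrib_left)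
  finally show ?thesis .
qed

lemma strict_part:
  fixes A :: "'i::finite \<Rightarrow> 'a set" and p :: "'i \<Rightarrow> 's::finite \<Rightarrow> 'a \<Rightarrow> real"
    and v :: "'i \<Rightarrow> 's \<Rightarrow> 'a \<Rightarrow> ('i \<Rightarrow> 's \<Rightarrow> 'a \<Rightarrow> real) \<Rightarrow> real"
  assumes fin: "\<And>i. finite (A i)" and p: "p \<in> policies A"
    and pure: "\<forall>i s. \<exists>b\<in>A i. \<forall>c\<in>A i. p i s c = (if c = b then 1 else 0)"
    and strict: "\<forall>q\<in>policies A - {p}. pinner A (\<lambda>i s b. v i s b p) (pdiff q p) < 0"
    and cont: "\<forall>i s b. b \<in> A i \<longrightarrow> (v i s b \<longlongrightarrow> v i s b p) (Kf A p)"
  shows "\<exists>mu>0. \<exists>delta>0. \<forall>q\<in>policies A. pnorm A (pdiff q p) < delta \<longrightarrow>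
            pinner A (\<lambda>i s b. v i s b q) (pdiff q p) \<le> - mu * pnorm A (pdiff q p)"
proof -
  obtain bs where bs: "\<And>i s. bs i s \<in> A i" "\<And>i s c. c \<in> A i \<Longrightarrow> p i s c = (if c = bs i s then 1 else 0)"
    using pure by metis
  define vp where "vp i s b = v i s b p" for i s b
  have gap: "vp i s b - vp i s (bs i s) < 0" if b: "b \<in> A i" "b \<noteq> bs i s" for i s b
  proof -
    define q where "q = p(i := (p i)(s := (\<lambda>c. if c = b then 1 else (0::real))))"
    have qpol: "q \<in> policies A"
      unfolding policies_def
    proof (intro CollectI allI conjI ballI impI)
      fix j s'
      show "\<And>c. c \<in> A j \<Longrightarrow> 0 \<le> q j s' c" using p unfolding q_def policies_def by auto
      show "\<And>c. c \<notin> A j \<Longrightarrow> q j s' c = 0" using p b unfolding q_def policies_def by auto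
      show "(\<Sum>c\<in>A j. q j s' c) = 1"
        using p b fin unfolding q_def policies_def by (auto simp: sum.delta')
    qed
    have "q i s b = 1" "p i s b = 0" using bs(2)[OF b(1)] b(2) unfolding q_def by auto
    then have qp: "q \<noteq> p" by auto
    have pd: "pdiff q p = (\<lambda>j s' c. if j = i \<and> s' = s then (if c = b then 1 else 0) - p i s c else 0)"
      unfolding q_def pdiff_def by (intro ext) auto
    have "pinner A (\<lambda>i s b. v i s b p) (pdiff q p) = (\<Sum>c\<in>A i. vp i s c * ((if c = b then 1 else 0) - p i s c))"
      unfolding pd pinner_single vp_def ..
    also have "\<dots> = (\<Sum>c\<in>A i. if c = b then vp i s c else 0) - (\<Sum>c\<in>A i. if c = bs i s then vp i s c else 0)"
      unfolding sum_subtractf[symmetric] by (intro sum.cong refl) (auto simp: bs(2) right_diff_distrib)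
    also have "\<dots> = vp i s b - vp i s (bs i s)" using b bs(1) fin by (simp add: sum.delta')
    finally show ?thesis using strict qpol qp by force
  qed
  define Gs where "Gs = (\<lambda>(i, s, b). vp i s (bs i s) - vp i s b) ` {k \<in> KK A. snd (snd k) \<noteq> bs (fst k) (fst (snd k))}"
  have fK: "finite (KK A :: ('i \<times> 's \<times> 'a) set)" by (rule finite_KK) (rule fin)
  have finGs: "finite Gs" unfolding Gs_def using fK by auto
  define c0 where "c0 = Min (insert 1 Gs)"
  have c0pos: "c0 > 0"
    unfolding c0_def using finGs gap by (auto simp: Gs_def KK_def)
  have c0le: "vp i s b - vp i s (bs i s) \<le> - c0" if "b \<in> A i" "b \<noteq> bs i s" for i s b
  proof -
    have "vp i s (bs i s) - vp i s b \<in> Gs"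
      unfolding Gs_def KK_def using that by (auto intro!: image_eqI[where x="(i, s, b)"])
    then have "c0 \<le> vp i s (bs i s) - vp i s b" unfolding c0_def using finGs by simp
    then show ?thesis by simp
  qed
  have lin: "pinner A vp (pdiff q p) \<le> - (c0 / 2) * L1 A (pdiff q p)" if q: "q \<in> policies A" for q
  proof -
    have "pinner A vp (pdiff q p) \<le> (\<Sum>i\<in>UNIV. \<Sum>s\<in>UNIV. - (c0 / 2) * (\<Sum>b\<in>A i. \<bar>pdiff q p i s b\<bar>))"
      unfolding pinner_def
    proof (intro sum_mono)
      fix i s
      show "(\<Sum>b\<in>A i. vp i s b * pdiff q p i s b) \<le> - (c0 / 2) * (\<Sum>b\<in>A i. \<bar>pdiff q p i s b\<bar>)"
        unfolding pdiff_def
        by (rule row_strict[OF fin bs(1)]) (use q c0pos c0le bs(2) in \<open>auto simp: policies_def\<close>)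
    qed
    also have "\<dots> = - (c0 / 2) * L1 A (pdiff q p)" unfolding L1_def by (simp add: sum_distrib_left)
    finally show ?thesis .
  qed
  have ev: "eventually (\<lambda>y. \<forall>i s. \<forall>b\<in>A i. \<bar>v i s b y - vp i s b\<bar> < c0 / 4) (Kf A p)"
  proof -
    have "\<forall>i s. eventually (\<lambda>y. \<forall>b\<in>A i. \<bar>v i s b y - vp i s b\<bar> < c0 / 4) (Kf A p)"
    proof (intro allI)
      fix i s
      show "eventually (\<lambda>y. \<forall>b\<in>A i. \<bar>v i s b y - vp i s b\<bar> < c0 / 4) (Kf A p)"
      proof (rule eventually_ball_finite[OF fin], rule ballI)
        fix b assume "b \<in> A i"
        then have "(v i s b \<longlongrightarrow> vp i s b) (Kf A p)" using cont unfolding vp_def by blast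
        then show "eventually (\<lambda>y. \<bar>v i s b y - vp i s b\<bar> < c0 / 4) (Kf A p)"
          using c0pos unfolding tendsto_iff dist_real_def by (metis zero_less_divide_iff zero_less_numeral)
      qed
    qed
    then show ?thesis by (simp add: eventually_all_finite)
  qed
  then obtain delta where delta: "delta > 0"
    "\<forall>y. pnorm A (pdiff y p) < delta \<longrightarrow> (\<forall>i s. \<forall>b\<in>A i. \<bar>v i s b y - vp i s b\<bar> < c0 / 4)"
    using Kf_eventually by blast
  have main: "\<forall>q\<in>policies A. pnorm A (pdiff q p) < delta \<longrightarrow>
            pinner A (\<lambda>i s b. v i s b q) (pdiff q p) \<le> - (c0 / 4) * pnorm A (pdiff q p)"
  proof (intro ballI impI)
    fix q assume q: "q \<in> policies A" and small: "pnorm A (pdiff q p) < delta"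
    have err: "pinner A (\<lambda>i s b. v i s b q - vp i s b) (pdiff q p) \<le> c0 / 4 * L1 A (pdiff q p)"
      using delta(2) small by (intro pinner_err) (auto intro: less_imp_le)
    have "pinner A (\<lambda>i s b. v i s b q) (pdiff q p) = pinner A vp (pdiff q p) + pinner A (\<lambda>i s b. v i s b q - vp i s b) (pdiff q p)"
      using pinner_diff[of A "\<lambda>i s b. v i s b q" "pdiff q p" vp] by (simp add: algebra_simps)
    also have "\<dots> \<le> - (c0 / 2) * L1 A (pdiff q p) + c0 / 4 * L1 A (pdiff q p)"
      using lin[OF q] err by linarith
    also have "\<dots> = - (c0 / 4) * L1 A (pdiff q p)" by simp
    also have "\<dots> \<le> - (c0 / 4) * pnorm A (pdiff q p)"
      using pnorm_le_L1[where d="pdiff q p", OF fin] c0pos by simp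
    finally show "pinner A (\<lambda>i s b. v i s b q) (pdiff q p) \<le> - (c0 / 4) * pnorm A (pdiff q p)" .
  qed
  show ?thesis using main delta(1) c0pos
    by (intro exI[of _ "c0 / 4"] exI[of _ delta] conjI) auto
qed



lemma Qf_diff: "Qf A C1 d - Qf A C2 d = Qf A (\<lambda>i s b j s' c. C1 i s b j s' c - C2 i s b j s' c) d"
  unfolding Qf_def by (simp add: sum_subtractf algebra_simps)

lemma Qf_err:
  assumes "\<forall>i s. \<forall>b\<in>A i. \<forall>j s'. \<forall>c\<in>A j. \<bar>E i s b j s' c\<bar> \<le> e"
  shows "Qf A E d \<le> e * L1 A d * L1 A d"
proof -
  have "Qf A E d \<le> (\<Sum>i\<in>UNIV. \<Sum>s\<in>UNIV. \<Sum>b\<in>A i. \<Sum>j\<in>UNIV. \<Sum>s'\<in>UNIV. \<Sum>c\<in>A j.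
        e * \<bar>d i s b\<bar> * \<bar>d j s' c\<bar>)"
    unfolding Qf_def
  proof (intro sum_mono)
    fix i s b j s' c assume b: "b \<in> A i" and c: "c \<in> A j"
    have "d i s b * E i s b j s' c * d j s' c \<le> \<bar>E i s b j s' c\<bar> * (\<bar>d i s b\<bar> * \<bar>d j s' c\<bar>)"
      by (simp add: abs_mult[symmetric] mult_ac)
    also have "\<dots> \<le> e * (\<bar>d i s b\<bar> * \<bar>d j s' c\<bar>)"
      using assms b c by (intro mult_right_mono) auto
    finally show "d i s b * E i s b j s' c * d j s' c \<le> e * \<bar>d i s b\<bar> * \<bar>d j s' c\<bar>"
      by (simp add: mult_ac)
  qed
  also have "\<dots> = (\<Sum>i\<in>UNIV. \<Sum>s\<in>UNIV. \<Sum>b\<in>A i. (e * \<bar>d i s b\<bar>) * L1 A d)"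
    unfolding L1_def by (simp add: sum_distrib_left)
  also have "\<dots> = (\<Sum>i\<in>UNIV. \<Sum>s\<in>UNIV. \<Sum>b\<in>A i. e * \<bar>d i s b\<bar>) * L1 A d"
    by (simp only: sum_distrib_right)
  also have "\<dots> = e * L1 A d * L1 A d"
    unfolding L1_def by (simp only: sum_distrib_left)
  finally show ?thesis .
qed

lemma sos_part:
  fixes A :: "'i::finite \<Rightarrow> 'a set" and p :: "'i \<Rightarrow> 's::finite \<Rightarrow> 'a \<Rightarrow> real"
    and v :: "'i \<Rightarrow> 's \<Rightarrow> 'a \<Rightarrow> ('i \<Rightarrow> 's \<Rightarrow> 'a \<Rightarrow> real) \<Rightarrow> real"
    and H :: "'i \<Rightarrow> 's \<Rightarrow> 'a \<Rightarrow> 'i \<Rightarrow> 's \<Rightarrow> 'a \<Rightarrow> ('i \<Rightarrow> 's \<Rightarrow> 'a \<Rightarrow> real) \<Rightarrow> real"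
  assumes fin: "\<And>i. finite (A i)" and p: "p \<in> policies A" and polU: "policies A \<subseteq> U"
    and conv: "\<forall>q\<in>policies A. \<forall>t. 0 \<le> t \<longrightarrow> t \<le> 1 \<longrightarrow> addv p t (pdiff q p) \<in> policies A"
    and D2: "\<forall>i s b. b \<in> A i \<longrightarrow> (\<forall>x\<in>U. \<forall>h. ((\<lambda>t. v i s b (addv x t h)) has_real_derivative
                pinner A h (\<lambda>j s' c. H i s b j s' c x)) (at 0))"
    and cont: "\<forall>i s b j s' c. b \<in> A i \<longrightarrow> c \<in> A j \<longrightarrow> (H i s b j s' c \<longlongrightarrow> H i s b j s' c p) (Kf A p)"
    and fo: "\<forall>q\<in>policies A. pinner A (\<lambda>i s b. v i s b p) (pdiff q p) \<le> 0"
    and m: "m > 0"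
    and quad: "\<forall>q\<in>policies A. Qf A (\<lambda>i s b j s' c. H i s b j s' c p) (pdiff q p) \<le> - m * (pnorm A (pdiff q p))\<^sup>2"
  shows "\<exists>mu>0. \<exists>delta>0. \<forall>q\<in>policies A. pnorm A (pdiff q p) < delta \<longrightarrow>
            pinner A (\<lambda>i s b. v i s b q) (pdiff q p) \<le> - mu * (pnorm A (pdiff q p))\<^sup>2"
proof -
  define N where "N = real (card (KK A :: ('i \<times> 's \<times> 'a) set))"
  define eps where "eps = m / (2 * (N + 1))"
  have N0: "N \<ge> 0" unfolding N_def by simp
  have eps0: "eps > 0" unfolding eps_def using m N0 by simp
  have epsN: "eps * N \<le> m / 2"
  proof -
    have "eps * N = m * N / (2 * (N + 1))" unfolding eps_def by simp
    also have "\<dots> \<le> m * (N + 1) / (2 * (N + 1))"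
      using m N0 by (intro divide_right_mono mult_left_mono) auto
    also have "\<dots> = m / 2" using N0 by (simp add: field_simps)
    finally show ?thesis .
  qed
  have ev: "eventually (\<lambda>y. \<forall>i s. \<forall>b\<in>A i. \<forall>j s'. \<forall>c\<in>A j.
      \<bar>H i s b j s' c y - H i s b j s' c p\<bar> < eps) (Kf A p)"
  proof -
    have one: "eventually (\<lambda>y. \<bar>H i s b j s' c y - H i s b j s' c p\<bar> < eps) (Kf A p)"
      if "b \<in> A i" "c \<in> A j" for i s b j s' c
    proof -
      have "(H i s b j s' c \<longlongrightarrow> H i s b j s' c p) (Kf A p)" using cont that by blast
      then show ?thesis using eps0 unfolding tendsto_iff dist_real_def by blast
    qed
    have "eventually (\<lambda>y. \<forall>c\<in>A j. \<bar>H i s b j s' c y - H i s b j s' c p\<bar> < eps) (Kf A p)"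
      if "b \<in> A i" for i s b j s'
      using one that by (intro eventually_ball_finite[OF fin]) blast
    then have "eventually (\<lambda>y. \<forall>j s'. \<forall>c\<in>A j. \<bar>H i s b j s' c y - H i s b j s' c p\<bar> < eps) (Kf A p)"
      if "b \<in> A i" for i s b
      using that by (simp add: eventually_all_finite)
    then have "eventually (\<lambda>y. \<forall>b\<in>A i. \<forall>j s'. \<forall>c\<in>A j. \<bar>H i s b j s' c y - H i s b j s' c p\<bar> < eps) (Kf A p)"
      for i s
      by (intro eventually_ball_finite[OF fin]) blast
    then show ?thesis by (simp add: eventually_all_finite)
  qed
  then obtain delta where delta: "delta > 0"
    "\<forall>y. pnorm A (pdiff y p) < delta \<longrightarrow> (\<forall>i s. \<forall>b\<in>A i. \<forall>j s'. \<forall>c\<in>A j.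
      \<bar>H i s b j s' c y - H i s b j s' c p\<bar> < eps)"
    using Kf_eventually by blast
  have main: "pinner A (\<lambda>i s b. v i s b q) (pdiff q p) \<le> - (m / 2) * (pnorm A (pdiff q p))\<^sup>2"
    if q: "q \<in> policies A" and small: "pnorm A (pdiff q p) < delta" for q
  proof -
    define d where "d = pdiff q p"
    define phi where "phi u = (\<Sum>i\<in>UNIV. \<Sum>s\<in>UNIV. \<Sum>b\<in>A i. v i s b (addv p u d) * d i s b)" for u
    define phi' where "phi' u = Qf A (\<lambda>i s b j s' c. H i s b j s' c (addv p u d)) d" for u
    have der: "DERIV phi t :> phi' t" if t: "0 \<le> t" "t \<le> 1" for t
    proof -
      have inU: "addv p t d \<in> U" using conv q t polU unfolding d_def by blast
      have "DERIV phi t :> (\<Sum>i\<in>UNIV. \<Sum>s\<in>UNIV. \<Sum>b\<in>A i. pinner A d (\<lambda>j s' c. H i s b j s' c (addv p t d)) * d i s b)"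
        unfolding phi_def
      proof (intro DERIV_sum DERIV_cmult_right)
        fix i s b assume "b \<in> A i"
        then have "\<forall>x\<in>U. \<forall>h. ((\<lambda>t. v i s b (addv x t h)) has_real_derivative
                pinner A h (\<lambda>j s' c. H i s b j s' c x)) (at 0)" using D2 by blast
        from deriv_line[OF this inU] show "DERIV (\<lambda>u. v i s b (addv p u d)) t :> pinner A d (\<lambda>j s' c. H i s b j s' c (addv p t d))" .
      qed
      also have "(\<Sum>i\<in>UNIV. \<Sum>s\<in>UNIV. \<Sum>b\<in>A i. pinner A d (\<lambda>j s' c. H i s b j s' c (addv p t d)) * d i s b) = phi' t"
        unfolding phi'_def Qf_def pinner_def by (simp add: sum_distrib_right sum_distrib_left mult_ac)
      finally show ?thesis .
    qed
    obtain th where th: "0 < th" "th < 1" "phi 1 - phi 0 = (1 - 0) * phi' th"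
      using MVT2[of 0 1 phi phi'] der by auto
    have y1: "addv p 1 d = q" unfolding d_def by (simp add: addv_def pdiff_def)
    have phi1: "phi 1 = pinner A (\<lambda>i s b. v i s b q) d" unfolding phi_def pinner_def y1 ..
    have phi0: "phi 0 = pinner A (\<lambda>i s b. v i s b p) d" unfolding phi_def pinner_def by simp
    have dth: "pdiff (addv p th d) p = (\<lambda>i s b. th * d i s b)" by (simp add: addv_def pdiff_def fun_eq_iff)
    have "pnorm A (pdiff (addv p th d) p) = th * pnorm A d"
      unfolding dth pnorm_scale using th by simp
    also have "\<dots> < delta"
    proof -
      have "th * pnorm A d \<le> 1 * pnorm A d"
        using th pnorm_nonneg[where d=d, OF fin] by (intro mult_right_mono) auto
      then show ?thesis using small unfolding d_def by simp
    qed
    finally have close: "\<forall>i s. \<forall>b\<in>A i. \<forall>j s'. \<forall>c\<in>A j.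
      \<bar>H i s b j s' c (addv p th d) - H i s b j s' c p\<bar> < eps" using delta(2) by blast
    have err: "Qf A (\<lambda>i s b j s' c. H i s b j s' c (addv p th d) - H i s b j s' c p) d \<le> eps * L1 A d * L1 A d"
      using close by (intro Qf_err) (auto intro: less_imp_le)
    have L1sq: "L1 A d * L1 A d \<le> N * (pnorm A d)\<^sup>2"
    proof -
      have "L1 A d \<le> sqrt N * pnorm A d" unfolding N_def by (rule L1_le_pnorm[OF fin])
      then have "L1 A d * L1 A d \<le> (sqrt N * pnorm A d) * (sqrt N * pnorm A d)"
        using L1_nonneg[where A=A and d=d] by (intro mult_mono) auto
      also have "\<dots> = N * (pnorm A d)\<^sup>2" using N0 by (simp add: power2_eq_square mult_ac)
      finally show ?thesis .
    qed
    have "pinner A (\<lambda>i s b. v i s b q) d = phi 0 + phi' th" using phi1 th(3) by simp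
    also have "\<dots> = pinner A (\<lambda>i s b. v i s b p) d + Qf A (\<lambda>i s b j s' c. H i s b j s' c p) d
        + Qf A (\<lambda>i s b j s' c. H i s b j s' c (addv p th d) - H i s b j s' c p) d"
      unfolding phi0 phi'_def using Qf_diff[of A "\<lambda>i s b j s' c. H i s b j s' c (addv p th d)" d
          "\<lambda>i s b j s' c. H i s b j s' c p"] by simp
    also have "\<dots> \<le> 0 + (- m * (pnorm A d)\<^sup>2) + eps * (N * (pnorm A d)\<^sup>2)"
    proof -
      have "eps * L1 A d * L1 A d \<le> eps * (N * (pnorm A d)\<^sup>2)"
        using L1sq eps0 by (simp add: mult.assoc mult_left_mono)
      then show ?thesis using fo q quad err unfolding d_def by fastforce
    qed
    also have "\<dots> \<le> - (m / 2) * (pnorm A d)\<^sup>2"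
    proof -
      have "eps * (N * (pnorm A d)\<^sup>2) \<le> m / 2 * (pnorm A d)\<^sup>2"
        using mult_right_mono[OF epsN, of "(pnorm A d)\<^sup>2"] by (simp add: mult.assoc)
      then show ?thesis by simp
    qed
    finally show ?thesis unfolding d_def .
  qed
  show ?thesis using main delta(1) m
    by (intro exI[of _ "m / 2"] exI[of _ delta] conjI) auto
qed



lemma pinner_cong: "(\<And>i s b. b \<in> A i \<Longrightarrow> X i s b = Y i s b) \<Longrightarrow> pinner A X d = pinner A Y d"
  unfolding pinner_def by (intro sum.cong refl) auto

lemma Qf_cong: "(\<And>i s b j s' c. b \<in> A i \<Longrightarrow> c \<in> A j \<Longrightarrow> C1 i s b j s' c = C2 i s b j s' c) \<Longrightarrow> Qf A C1 d = Qf A C2 d"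
  unfolding Qf_def by (intro sum.cong refl) auto

lemma jac_Qf: "jac_quad A P r rho p x = Qf A (\<lambda>i s b j s' c. pderiv_coord (\<lambda>q. vgrad A P r rho q i s b) p j s' c) x"
  unfolding jac_quad_def Qf_def ..

lemma kap_exists:
  fixes zeta :: real and N :: nat
  assumes "zeta > 0"
  shows "\<exists>kap>1. (1 - zeta) * kap ^ N < 1"
proof -
  have "((\<lambda>k. (1 - zeta) * k ^ N) \<longlongrightarrow> (1 - zeta) * 1 ^ N) (at_right (1::real))"
    by (intro tendsto_intros)
  then have "eventually (\<lambda>k. (1 - zeta) * k ^ N < 1) (at_right (1::real))"
    using assms by (intro order_tendstoD(2)) auto
  then obtain b where b: "b > 1" "\<forall>y>1. y < b \<longrightarrow> (1 - zeta) * y ^ N < 1"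
    unfolding eventually_at_right_field by blast
  then show ?thesis by (intro exI[of _ "(1 + b) / 2"]) auto
qed

context game begin

lemma nash_fo:
  fixes r :: "'i \<Rightarrow> 's \<Rightarrow> ('i \<Rightarrow> 'a) \<Rightarrow> real" and rho :: "'s \<Rightarrow> real"
    and F :: "'i \<Rightarrow> ('i \<Rightarrow> 's \<Rightarrow> 'a \<Rightarrow> real) \<Rightarrow> real"
    and G :: "'i \<Rightarrow> 'i \<Rightarrow> 's \<Rightarrow> 'a \<Rightarrow> ('i \<Rightarrow> 's \<Rightarrow> 'a \<Rightarrow> real) \<Rightarrow> real"
  assumes Feq: "\<forall>i. \<forall>q\<in>U. Vval A P r rho q i = F i q"
    and D: "\<forall>i. \<forall>x\<in>U. \<forall>h. ((\<lambda>t. F i (addv x t h)) has_real_derivative pinner A h (\<lambda>j s b. G i j s b x)) (at 0)"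
    and nash: "is_nash A P r rho p" and q: "q \<in> policies A"
  shows "pinner A (\<lambda>i s b. G i i s b p) (pdiff q p) \<le> 0"
proof -
  define d where "d = pdiff q p"
  have p: "p \<in> policies A" using nash unfolding is_nash_def by blast
  have Di: "(\<Sum>s\<in>UNIV. \<Sum>b\<in>A i. d i s b * G i i s b p) \<le> 0" for i
  proof (rule ccontr)
    assume pos: "\<not> ?thesis"
    define h where "h = (\<lambda>j s b. if j = i then d j s b else 0)"
    have "pinner A h (\<lambda>j s b. G i j s b p) = (\<Sum>j\<in>UNIV. if j = i then (\<Sum>s\<in>UNIV. \<Sum>b\<in>A j. d j s b * G i j s b p) else 0)"
      unfolding pinner_def
    proof (intro sum.cong refl)
      fix j
      show "(\<Sum>s\<in>UNIV. \<Sum>b\<in>A j. h j s b * G i j s b p) = (if j = i then (\<Sum>s\<in>UNIV. \<Sum>b\<in>A j. d j s b * G i j s b p) else 0)"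
      proof (cases "j = i")
        case True
        have hj: "\<And>s b. h j s b = d j s b" unfolding h_def using True by simp
        show ?thesis unfolding if_P[OF True] by (simp only: hj)
      next
        case False
        have hj: "\<And>s b. h j s b = 0" unfolding h_def using False by simp
        show ?thesis unfolding if_not_P[OF False] by (simp only: hj mult_zero_left sum.neutral_const)
      qed
    qed
    also have "\<dots> = (\<Sum>s\<in>UNIV. \<Sum>b\<in>A i. d i s b * G i i s b p)" by (simp add: sum.delta')
    finally have hD: "pinner A h (\<lambda>j s b. G i j s b p) = (\<Sum>s\<in>UNIV. \<Sum>b\<in>A i. d i s b * G i i s b p)" .
    have pU: "p \<in> U" using p pol_U by blast
    have "((\<lambda>t. F i (addv p t h)) has_real_derivative pinner A h (\<lambda>j s b. G i j s b p)) (at 0)"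
      using D pU by blast
    then have der: "((\<lambda>t. F i (addv p t h)) has_real_derivative (\<Sum>s\<in>UNIV. \<Sum>b\<in>A i. d i s b * G i i s b p)) (at 0)"
      unfolding hD .
    obtain del where del: "del > 0" "\<forall>t>0. t < del \<longrightarrow> F i (addv p 0 h) < F i (addv p (0 + t) h)"
      using DERIV_pos_inc_right[OF der] pos by force
    define t where "t = min (del / 2) 1"
    have t: "0 < t" "t < del" "t \<le> 1" unfolding t_def using del by auto
    define q' where "q' = addv p t d"
    have q': "q' \<in> policies A" unfolding q'_def d_def using pol_convex[OF p q] t by auto
    have hq: "addv p t h = p(i := q' i)"
      unfolding q'_def h_def by (auto simp: addv_def fun_eq_iff)
    have pi: "p(i := q' i) \<in> policies A"
      using p q' unfolding policies_def by auto
    have "Vval A P r rho (p(i := q' i)) i \<le> Vval A P r rho p i"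
      using nash q' unfolding is_nash_def by blast
    moreover have "Vval A P r rho (p(i := q' i)) i = F i (addv p t h)"
      using Feq pi pol_U hq by auto
    moreover have "Vval A P r rho p i = F i (addv p 0 h)" using Feq pU by simp
    ultimately show False using del t by force
  qed
  have "pinner A (\<lambda>i s b. G i i s b p) d = (\<Sum>i\<in>UNIV. \<Sum>s\<in>UNIV. \<Sum>b\<in>A i. d i s b * G i i s b p)"
    unfolding pinner_def by (simp add: mult.commute)
  also have "\<dots> \<le> 0" by (rule sum_nonpos) (rule Di)
  finally show ?thesis unfolding d_def .
qed

end


theorem proposition1:
  fixes A :: "'i::finite \<Rightarrow> 'a set"
    and P :: "'s::finite \<Rightarrow> ('i \<Rightarrow> 'a) \<Rightarrow> 's \<Rightarrow> real"
    and r :: "'i \<Rightarrow> 's \<Rightarrow> ('i \<Rightarrow> 'a) \<Rightarrow> real"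
    and rho :: "'s \<Rightarrow> real"
    and zeta :: real
    and pistar :: "'i \<Rightarrow> 's \<Rightarrow> 'a \<Rightarrow> real"
  assumes A_fin: "\<And>i. finite (A i)"
    and A_ne: "\<And>i. A i \<noteq> {}"
    and r_bnd: "\<And>i s a. a \<in> joint_actions A \<Longrightarrow> \<bar>r i s a\<bar> \<le> 1"
    and P_nonneg: "\<And>s a s'. a \<in> joint_actions A \<Longrightarrow> 0 \<le> P s a s'"
    and zeta_pos: "zeta > 0"
    and stop: "\<And>s a. a \<in> joint_actions A \<Longrightarrow> 1 - (\<Sum>s'\<in>UNIV. P s a s') \<ge> zeta"
    and rho_nonneg: "\<And>s. 0 \<le> rho s"
    and rho_sum: "(\<Sum>s\<in>UNIV. rho s) = 1"
    and nash: "is_nash A P r rho pistar"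
  shows "(is_SOS A P r rho pistar \<longrightarrow>
            (\<exists>mu>0. \<exists>delta>0. \<forall>q\<in>policies A. pnorm A (pdiff q pistar) < delta \<longrightarrow>
               pinner A (vgrad A P r rho q) (pdiff q pistar) \<le> - mu * (pnorm A (pdiff q pistar))\<^sup>2))
       \<and> (is_strict A P r rho pistar \<longrightarrow>
            (\<exists>mu>0. \<exists>delta>0. \<forall>q\<in>policies A. pnorm A (pdiff q pistar) < delta \<longrightarrow>
               pinner A (vgrad A P r rho q) (pdiff q pistar) \<le> - mu * pnorm A (pdiff q pistar)))"
proof -
  obtain kap where kap: "1 < kap" "(1 - zeta) * kap ^ CARD('i) < 1"
    using kap_exists[OF zeta_pos] by blast
  interpret g: game A P zeta kap
    by unfold_locales (use A_fin A_ne P_nonneg stop kap in auto)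
  have fin: "\<And>i. finite (A i)" by (rule A_fin)
  have p: "pistar \<in> policies A" using nash unfolding is_nash_def by blast
  have pU: "pistar \<in> g.U" using p g.pol_U by blast
  have Fsm: "sm A g.U (Fv A P r rho i)" for i
    by (rule sm_Fv) (use g.det_nz in blast)
  have Veq: "\<forall>i. \<forall>q\<in>g.U. Vval A P r rho q i = Fv A P r rho i q"
    using g.V_eq by blast
  have "\<forall>i. \<exists>Gi. (\<forall>j s b. b \<in> A j \<longrightarrow> sm A g.U (Gi j s b)) \<and>
     (\<forall>x\<in>g.U. \<forall>h. ((\<lambda>t. Fv A P r rho i (addv x t h)) has_real_derivative pinner A h (\<lambda>j s b. Gi j s b x)) (at 0))"
    using sm_deriv[OF Fsm fin] by blast
  then obtain G where G: "\<And>i. (\<forall>j s b. b \<in> A j \<longrightarrow> sm A g.U (G i j s b)) \<and>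
     (\<forall>x\<in>g.U. \<forall>h. ((\<lambda>t. Fv A P r rho i (addv x t h)) has_real_derivative pinner A h (\<lambda>j s b. G i j s b x)) (at 0))"
    by metis
  define v where "v i s b = G i i s b" for i s b
  have vsm: "sm A g.U (v i s b)" if "b \<in> A i" for i s b
    using G that unfolding v_def by blast
  have vgeq: "vgrad A P r rho q i s b = v i s b q" if "q \<in> g.U" "b \<in> A i" for q i s b
  proof -
    have D: "\<forall>x\<in>g.U. \<forall>h. ((\<lambda>t. Fv A P r rho i (addv x t h)) has_real_derivative pinner A h (\<lambda>j s b. G i j s b x)) (at 0)"
      using G by blast
    have eq: "\<forall>y\<in>g.U. (\<lambda>q. Vval A P r rho q i) y = Fv A P r rho i y" using Veq by blast
    show ?thesis
      unfolding vgrad_def v_def by (rule pderiv_eq[OF fin that(2) that(1) g.lineopen_U eq D])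
  qed
  have "\<forall>k. \<exists>Hk. snd (snd k) \<in> A (fst k) \<longrightarrow>
      ((\<forall>j s' c. c \<in> A j \<longrightarrow> sm A g.U (Hk j s' c)) \<and>
       (\<forall>x\<in>g.U. \<forall>h. ((\<lambda>t. v (fst k) (fst (snd k)) (snd (snd k)) (addv x t h)) has_real_derivative
           pinner A h (\<lambda>j s' c. Hk j s' c x)) (at 0)))"
  proof
    fix k :: "'i \<times> 's \<times> 'a"
    show "\<exists>Hk. snd (snd k) \<in> A (fst k) \<longrightarrow>
      ((\<forall>j s' c. c \<in> A j \<longrightarrow> sm A g.U (Hk j s' c)) \<and>
       (\<forall>x\<in>g.U. \<forall>h. ((\<lambda>t. v (fst k) (fst (snd k)) (snd (snd k)) (addv x t h)) has_real_derivative
           pinner A h (\<lambda>j s' c. Hk j s' c x)) (at 0)))"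
    proof (cases "snd (snd k) \<in> A (fst k)")
      case True
      then show ?thesis using sm_deriv[OF vsm[OF True] fin] by blast
    qed blast
  qed
  then obtain Hf where Hf: "\<And>k. snd (snd k) \<in> A (fst k) \<longrightarrow>
      ((\<forall>j s' c. c \<in> A j \<longrightarrow> sm A g.U (Hf k j s' c)) \<and>
       (\<forall>x\<in>g.U. \<forall>h. ((\<lambda>t. v (fst k) (fst (snd k)) (snd (snd k)) (addv x t h)) has_real_derivative
           pinner A h (\<lambda>j s' c. Hf k j s' c x)) (at 0)))"
    by metis
  define H where "H i s b = Hf (i, s, b)" for i s b
  have Hsm: "sm A g.U (H i s b j s' c)" if "b \<in> A i" "c \<in> A j" for i s b j s' c
    using Hf[of "(i, s, b)"] that unfolding H_def by auto
  have D2: "\<forall>i s b. b \<in> A i \<longrightarrow> (\<forall>x\<in>g.U. \<forall>h. ((\<lambda>t. v i s b (addv x t h)) has_real_derivative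
                pinner A h (\<lambda>j s' c. H i s b j s' c x)) (at 0))"
  proof (intro allI impI)
    fix i s b assume "b \<in> A i"
    then show "\<forall>x\<in>g.U. \<forall>h. ((\<lambda>t. v i s b (addv x t h)) has_real_derivative
                pinner A h (\<lambda>j s' c. H i s b j s' c x)) (at 0)"
      using Hf[of "(i, s, b)"] unfolding H_def by auto
  qed
  have jaceq: "pderiv_coord (\<lambda>q. vgrad A P r rho q i s b) pistar j s' c = H i s b j s' c pistar"
    if b: "b \<in> A i" and c: "c \<in> A j" for i s b j s' c
  proof -
    have eq: "\<forall>y\<in>g.U. (\<lambda>q. vgrad A P r rho q i s b) y = v i s b y" using vgeq b by blast
    have D: "\<forall>x\<in>g.U. \<forall>h. ((\<lambda>t. v i s b (addv x t h)) has_real_derivative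
                pinner A h (\<lambda>j s' c. H i s b j s' c x)) (at 0)" using D2 b by blast
    show ?thesis by (rule pderiv_eq[OF fin c pU g.lineopen_U eq D])
  qed
  have pin_eq: "pinner A (vgrad A P r rho q) d = pinner A (\<lambda>i s b. v i s b q) d" if "q \<in> g.U" for q d
    by (rule pinner_cong) (use vgeq that in auto)
  have vcont: "\<forall>i s b. b \<in> A i \<longrightarrow> (v i s b \<longlongrightarrow> v i s b pistar) (Kf A pistar)"
    using sm_cont[OF vsm fin pU] by blast
  have Hcont: "\<forall>i s b j s' c. b \<in> A i \<longrightarrow> c \<in> A j \<longrightarrow> (H i s b j s' c \<longlongrightarrow> H i s b j s' c pistar) (Kf A pistar)"
    using sm_cont[OF Hsm fin pU] by blast
  show ?thesis
  proof (intro conjI impI)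
    assume sos: "is_SOS A P r rho pistar"
    have neg: "\<forall>q\<in>policies A - {pistar}. Qf A (\<lambda>i s b j s' c. H i s b j s' c pistar) (pdiff q pistar) < 0"
    proof
      fix q :: "'i \<Rightarrow> 's \<Rightarrow> 'a \<Rightarrow> real" assume "q \<in> policies A - {pistar}"
      then have "jac_quad A P r rho pistar (pdiff q pistar) < 0" using sos unfolding is_SOS_def by blast
      then show "Qf A (\<lambda>i s b j s' c. H i s b j s' c pistar) (pdiff q pistar) < 0"
        unfolding jac_Qf using Qf_cong[of A "\<lambda>i s b j s' c. pderiv_coord (\<lambda>q. vgrad A P r rho q i s b) pistar j s' c"
            "\<lambda>i s b j s' c. H i s b j s' c pistar" "pdiff q pistar"] jaceq by simp
    qed
    obtain m where m: "m > 0" "\<forall>q\<in>policies A. Qf A (\<lambda>i s b j s' c. H i s b j s' c pistar) (pdiff q pistar) \<le> - m * (pnorm A (pdiff q pistar))\<^sup>2"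
      using quad_bound[OF fin p neg] by blast
    have fo: "\<forall>q\<in>policies A. pinner A (\<lambda>i s b. v i s b pistar) (pdiff q pistar) \<le> 0"
    proof
      fix q :: "'i \<Rightarrow> 's \<Rightarrow> 'a \<Rightarrow> real" assume q: "q \<in> policies A"
      have "\<forall>i. \<forall>x\<in>g.U. \<forall>h. ((\<lambda>t. Fv A P r rho i (addv x t h)) has_real_derivative pinner A h (\<lambda>j s b. G i j s b x)) (at 0)"
        using G by blast
      from g.nash_fo[OF Veq this nash q] show "pinner A (\<lambda>i s b. v i s b pistar) (pdiff q pistar) \<le> 0"
        unfolding v_def .
    qed
    have conv: "\<forall>q\<in>policies A. \<forall>t. 0 \<le> t \<longrightarrow> t \<le> 1 \<longrightarrow> addv pistar t (pdiff q pistar) \<in> policies A"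
      using g.pol_convex[OF p] by blast
    obtain mu delta where md: "mu > 0" "delta > 0" "\<forall>q\<in>policies A. pnorm A (pdiff q pistar) < delta \<longrightarrow>
            pinner A (\<lambda>i s b. v i s b q) (pdiff q pistar) \<le> - mu * (pnorm A (pdiff q pistar))\<^sup>2"
      using sos_part[OF fin p g.pol_U conv D2 Hcont fo m(1) m(2)] by blast
    show "\<exists>mu>0. \<exists>delta>0. \<forall>q\<in>policies A. pnorm A (pdiff q pistar) < delta \<longrightarrow>
               pinner A (vgrad A P r rho q) (pdiff q pistar) \<le> - mu * (pnorm A (pdiff q pistar))\<^sup>2"
      using md pin_eq g.pol_U by (intro exI[of _ mu] exI[of _ delta] conjI) auto
  next
    assume st: "is_strict A P r rho pistar"
    have pure: "\<forall>i s. \<exists>b\<in>A i. \<forall>c\<in>A i. pistar i s c = (if c = b then 1 else 0)"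
      using st unfolding is_strict_def by blast
    have strict: "\<forall>q\<in>policies A - {pistar}. pinner A (\<lambda>i s b. v i s b pistar) (pdiff q pistar) < 0"
      using st pin_eq[OF pU] unfolding is_strict_def by auto
    obtain mu delta where md: "mu > 0" "delta > 0" "\<forall>q\<in>policies A. pnorm A (pdiff q pistar) < delta \<longrightarrow>
            pinner A (\<lambda>i s b. v i s b q) (pdiff q pistar) \<le> - mu * pnorm A (pdiff q pistar)"
      using strict_part[OF fin p pure strict vcont] by blast
    show "\<exists>mu>0. \<exists>delta>0. \<forall>q\<in>policies A. pnorm A (pdiff q pistar) < delta \<longrightarrow>
               pinner A (vgrad A P r rho q) (pdiff q pistar) \<le> - mu * pnorm A (pdiff q pistar)"
      using md pin_eq g.pol_U by (intro exI[of _ mu] exI[of _ delta] conjI) auto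
  qed
qed


end
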